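(* Assume the setting below, with $\kappa_f(x,i)=K_ix$ where the gains $K_i$ are such that the Markov jump linear system $z_{k+1}=\Gamma_{\theta_k}z_k$, $\Gamma_i=A_i+B_iK_i$, is mean square stable, and assume $\hat f_\theta$ is $\beta_f^\theta$-smooth and $\bar\ell(\cdot,\theta)$ is $\beta_\ell^\theta$-smooth for every $\theta$, and the pairs $\{(A_i,B_i)\}_{i\in\mathcal{N}}$ are mean square stabilizable. Then there exist $\delta>0$ and $\alpha>0$ such that the terminal cost $V_f$ constructed below with this $\alpha$ satisfies $$\mathcal{L}V_f(x,\theta):=\mathbb{E}[V_f(\hat f_\theta(x),\theta_{k+1})-V_f(x,\theta)\mid\theta_k=\theta]\le-\bar\ell(x,\theta)\quad\text{for all }x\in\mathcal{B}_\delta,\ \theta\in\mathcal{N}.$$ If, in addition, $X^f=\{X^f_i\}$ is uniformly positive invariant for the constrained system in closed loop with $\kappa_f$, with $X^f_i\subseteq\mathcal{B}_\delta$ for all $i$, and the strict stochastic dissipativity assumption holds with $\rho(x,i)\ge\gamma\|x-x_s\|^2$ for some $\gamma>0$, then the system controlled by the terminal-set EMPC law $\hat\kappa_N$ (with terminal penalty $V_f$ and terminal sets $X^f$) is locally mean square stable.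
   Context: Setting: $\mathcal{N}=\{1,\dots,\nu\}$; $\{\theta_k\}$ a time-homogeneous, irreducible, aperiodic Markov chain on $\mathcal{N}$ with transition matrix $P=(p_{ij})$, $\mathcal{C}(i)=\{j:p_{ij}>0\}$, on a filtered probability space with $\mathfrak{F}_k$ generated by the history up to time $k$; system $x_{k+1}=f(x_k,u_k,\theta_k)$ with constraints $(x_k,u_k)\in Y_{\theta_k}$ ($Y_\theta$ nonempty compact), stage cost $\ell$ (each $\ell(\cdot,\cdot,\theta)$ nonnegative, lower semicontinuous, level-bounded in $u$ locally uniformly in $x$), $f(\cdot,\cdot,\theta)$ continuous; $x_k,\theta_k$ measured at time $k$. There is a common optimal steady state $(x_s,u_s)=(0,0)$ for all modes with optimal steady-state cost $\ell_s$. $\mathcal{B}_\delta=\{x:\|x\|<\delta\}$. A function is $\beta$-smooth if differentiable with $\beta$-Lipschitz gradient (Jacobian). Define $\hat f_\theta(x)=f(x,K_\theta x,\theta)$, $\bar\ell(x,\theta)=\ell(x,K_\theta x,\theta)-\ell(0,0,\theta)$, $A_i=\frac{\partial f}{\partial x}(0,0,i)$, $B_i=\frac{\partial f}{\partial u}(0,0,i)$. For $\alpha>0$, $\ell_q(x,\theta)=\tfrac12(\alpha+\beta_\ell^\theta)\|x\|^2+\nabla\bar\ell(0,\theta)^\top x$, and $V_f(x,i)=\mathbb{E}[\sum_{k=0}^\infty\ell_q(x_k,\theta_k)\mid x_0=x,\theta_0=i]$ along $x_{k+1}=\Gamma_{\theta_k}x_k$. Strict stochastic dissipativity: there are $\lambda:\mathbb{R}^n\times\mathcal{N}\to\mathbb{R}$,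 lower semicontinuous in the first argument, with $\lambda(x_s,\theta)=\lambda_s$ independent of $\theta$, and convex $\rho:\mathbb{R}^n\times\mathcal{N}\to\mathbb{R}_+$ positive definite w.r.t. $x_s$, with $\mathbb{E}[\lambda(x_{k+1},\theta_{k+1})-\lambda(x_k,\theta_k)\mid\mathfrak{F}_k]\le\ell(x_k,u_k,\theta_k)-\ell_s-\rho(x_k,\theta_k)$ for all states, inputs and modes. UPI: $\{C_i\}$ is UPI for a constrained closed-loop system if $x_k\in C_{\theta_k}$ implies $x_{k+1}\in C_{\theta_{k+1}}$, constraints satisfied. Terminal-set EMPC: $\hat\kappa_N(x,\theta)$ is the first element of an optimal policy of minimizing $\mathbb{E}[V_f(x_N,\theta_N)+\sum_{j=0}^{N-1}\ell(x_j,u_j,\theta_j)\mid\mathfrak{F}_0]$ subject to $x_{k+1}=f(x_k,u_k,\theta_k)$, $(x_k,u_k)\in Y_{\theta_k}$, $(x_0,\theta_0)=(x,\theta)$, $x_N\in X^f_{\theta_N}$, $u_k$ $\mathfrak{F}_k$-measurable. Mean square stability means $\mathbb{E}\|x_k\|^2\to0$ as $k\to\infty$. *)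

theory Defs
  imports "HOL-Analysis.Analysis"
begin

definition lsc :: "('a::topological_space \<Rightarrow> real) \<Rightarrow> bool" where
  "lsc F \<longleftrightarrow> (\<forall>x c. c < F x \<longrightarrow> (\<forall>\<^sub>F y in nhds x. c < F y))"

definition level_bounded_loc_unif ::
  "('x::real_normed_vector \<Rightarrow> 'u::real_normed_vector \<Rightarrow> real) \<Rightarrow> bool" where
  "level_bounded_loc_unif L \<longleftrightarrow>
     (\<forall>x0 c. \<exists>V. open V \<and> x0 \<in> V \<and> bounded {(x, u). x \<in> V \<and> L x u \<le> c})"

definition smooth_scalar :: "real \<Rightarrow> ('a::euclidean_space \<Rightarrow> real) \<Rightarrow> bool" where
  "smooth_scalar \<beta> F \<longleftrightarrow> (\<exists>g. (\<forall>x. (F has_derivative (\<lambda>h. g x \<bullet> h)) (at x)) \<and>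
                                  (\<forall>x y. norm (g x - g y) \<le> \<beta> * norm (x - y)))"

definition smooth_map ::
  "real \<Rightarrow> ('a::euclidean_space \<Rightarrow> 'b::euclidean_space) \<Rightarrow> bool" where
  "smooth_map \<beta> F \<longleftrightarrow> (\<exists>D. (\<forall>x. (F has_derivative D x) (at x)) \<and>
                                (\<forall>x y. onorm (\<lambda>h. D x h - D y h) \<le> \<beta> * norm (x - y)))"

definition grad0 :: "('a::euclidean_space \<Rightarrow> real) \<Rightarrow> 'a" where
  "grad0 F = (THE g. (F has_derivative (\<lambda>h. g \<bullet> h)) (at 0))"

definition stochastic :: "('q::finite \<Rightarrow> 'q \<Rightarrow> real) \<Rightarrow> bool" where
  "stochastic P \<longleftrightarrow> (\<forall>i j. 0 \<le> P i j) \<and> (\<forall>i. (\<Sum>j\<in>UNIV. P i j) = 1)"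

fun Pn :: "('q::finite \<Rightarrow> 'q \<Rightarrow> real) \<Rightarrow> nat \<Rightarrow> 'q \<Rightarrow> 'q \<Rightarrow> real" where
  "Pn P 0 i j = (if i = j then 1 else 0)"
| "Pn P (Suc n) i j = (\<Sum>k\<in>UNIV. Pn P n i k * P k j)"

definition irreducible_chain :: "('q::finite \<Rightarrow> 'q \<Rightarrow> real) \<Rightarrow> bool" where
  "irreducible_chain P \<longleftrightarrow> (\<forall>i j. \<exists>n>0. Pn P n i j > 0)"

definition aperiodic_chain :: "('q::finite \<Rightarrow> 'q \<Rightarrow> real) \<Rightarrow> bool" where
  "aperiodic_chain P \<longleftrightarrow> (\<forall>i. Gcd {n. n > 0 \<and> Pn P n i i > 0} = 1)"

text \<open>Probability of the mode path theta_1..theta_k (given as a list) when theta_0 = i.\<close>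
fun pprob :: "('q \<Rightarrow> 'q \<Rightarrow> real) \<Rightarrow> 'q \<Rightarrow> 'q list \<Rightarrow> real" where
  "pprob P i [] = 1"
| "pprob P i (j # js) = P i j * pprob P j js"

definition paths :: "nat \<Rightarrow> 'q list set" where
  "paths k = {ms. length ms = k}"

text \<open>Expectation, given theta_0 = i, of a quantity depending on the mode history
  theta_0..theta_k (the history is passed as the list i # ms).\<close>
definition Ehist :: "('q::finite \<Rightarrow> 'q \<Rightarrow> real) \<Rightarrow> 'q \<Rightarrow> nat \<Rightarrow> ('q list \<Rightarrow> real) \<Rightarrow> real" where
  "Ehist P i k g = (\<Sum>ms\<in>paths k. pprob P i ms * g (i # ms))"

text \<open>Markov jump linear system z_{k+1} = G_{theta_k} z_k; state x_k along the
  mode path theta_0 = i, theta_1..theta_k = ms.\<close>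
fun lin_state :: "('q \<Rightarrow> real^'n^'n) \<Rightarrow> real^'n \<Rightarrow> 'q \<Rightarrow> 'q list \<Rightarrow> real^'n" where
  "lin_state G x i [] = x"
| "lin_state G x i (j # js) = lin_state G (G i *v x) j js"

definition MJLS_ms_stable :: "('q::finite \<Rightarrow> 'q \<Rightarrow> real) \<Rightarrow> ('q \<Rightarrow> real^'n^'n) \<Rightarrow> bool" where
  "MJLS_ms_stable P G \<longleftrightarrow>
     (\<forall>x i. (\<lambda>k. Ehist P i k (\<lambda>h. (norm (lin_state G x (hd h) (tl h)))\<^sup>2)) \<longlonglongrightarrow> 0)"

definition ms_stabilizable ::
  "('q::finite \<Rightarrow> 'q \<Rightarrow> real) \<Rightarrow> ('q \<Rightarrow> real^'n^'n) \<Rightarrow> ('q \<Rightarrow> real^'m^'n) \<Rightarrow> bool" where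
  "ms_stabilizable P A B \<longleftrightarrow>
     (\<exists>K::'q \<Rightarrow> real^'n^'m. MJLS_ms_stable P (\<lambda>i. A i + B i ** K i))"

text \<open>Nonlinear system under a history-dependent policy pol: the input at time k
  is pol (theta_0..theta_k). State x_k along theta_0 = i, theta_1..theta_k = ms.\<close>
fun pol_state :: "(real^'n \<Rightarrow> real^'m \<Rightarrow> 'q \<Rightarrow> real^'n) \<Rightarrow> ('q list \<Rightarrow> real^'m)
     \<Rightarrow> real^'n \<Rightarrow> 'q \<Rightarrow> 'q list \<Rightarrow> real^'n" where
  "pol_state f pol x i [] = x"
| "pol_state f pol x i (j # js) = pol_state f (\<lambda>h. pol (i # h)) (f x (pol [i]) i) j js"

fun cl_state :: "(real^'n \<Rightarrow> real^'m \<Rightarrow> 'q \<Rightarrow> real^'n) \<Rightarrow> (real^'n \<Rightarrow> 'q \<Rightarrow> real^'m)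
     \<Rightarrow> real^'n \<Rightarrow> 'q \<Rightarrow> 'q list \<Rightarrow> real^'n" where
  "cl_state f kap x i [] = x"
| "cl_state f kap x i (j # js) = cl_state f kap (f x (kap x i) i) j js"

definition fhat :: "(real^'n \<Rightarrow> real^'m \<Rightarrow> 'q \<Rightarrow> real^'n) \<Rightarrow> ('q \<Rightarrow> real^'n^'m)
     \<Rightarrow> 'q \<Rightarrow> real^'n \<Rightarrow> real^'n" where
  "fhat f K i x = f x (K i *v x) i"

definition lbar :: "(real^'n \<Rightarrow> real^'m \<Rightarrow> 'q \<Rightarrow> real) \<Rightarrow> ('q \<Rightarrow> real^'n^'m)
     \<Rightarrow> real^'n \<Rightarrow> 'q \<Rightarrow> real" where
  "lbar l K x i = l x (K i *v x) i - l 0 0 i"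

definition lq :: "(real^'n \<Rightarrow> real^'m \<Rightarrow> 'q \<Rightarrow> real) \<Rightarrow> ('q \<Rightarrow> real^'n^'m) \<Rightarrow> ('q \<Rightarrow> real)
     \<Rightarrow> real \<Rightarrow> real^'n \<Rightarrow> 'q \<Rightarrow> real" where
  "lq l K \<beta>l \<alpha> x i = (\<alpha> + \<beta>l i) / 2 * (norm x)\<^sup>2 + grad0 (\<lambda>y. lbar l K y i) \<bullet> x"

definition Vf :: "('q::finite \<Rightarrow> 'q \<Rightarrow> real) \<Rightarrow> ('q \<Rightarrow> real^'n^'n)
     \<Rightarrow> (real^'n \<Rightarrow> real^'m \<Rightarrow> 'q \<Rightarrow> real) \<Rightarrow> ('q \<Rightarrow> real^'n^'m) \<Rightarrow> ('q \<Rightarrow> real)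
     \<Rightarrow> real \<Rightarrow> real^'n \<Rightarrow> 'q \<Rightarrow> real" where
  "Vf P G l K \<beta>l \<alpha> x i =
     (\<Sum>k. Ehist P i k (\<lambda>h. lq l K \<beta>l \<alpha> (lin_state G x (hd h) (tl h)) (last h)))"

definition UPI :: "('q \<Rightarrow> 'q \<Rightarrow> real) \<Rightarrow> (real^'n \<Rightarrow> real^'m \<Rightarrow> 'q \<Rightarrow> real^'n)
     \<Rightarrow> ('q \<Rightarrow> ((real^'n) \<times> (real^'m)) set) \<Rightarrow> ('q \<Rightarrow> real^'n^'m) \<Rightarrow> ('q \<Rightarrow> (real^'n) set) \<Rightarrow> bool" where
  "UPI P f Y K C \<longleftrightarrow> (\<forall>i x. x \<in> C i \<longrightarrow>
      (x, K i *v x) \<in> Y i \<and> (\<forall>j. P i j > 0 \<longrightarrow> f x (K i *v x) i \<in> C j))"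

text \<open>Admissible policy for the N-step problem from (x,i): constraints hold almost
  surely, i.e. along every mode path of positive probability.\<close>
definition feasible_pol :: "('q::finite \<Rightarrow> 'q \<Rightarrow> real) \<Rightarrow> (real^'n \<Rightarrow> real^'m \<Rightarrow> 'q \<Rightarrow> real^'n)
     \<Rightarrow> ('q \<Rightarrow> ((real^'n) \<times> (real^'m)) set) \<Rightarrow> ('q \<Rightarrow> (real^'n) set) \<Rightarrow> nat
     \<Rightarrow> real^'n \<Rightarrow> 'q \<Rightarrow> ('q list \<Rightarrow> real^'m) \<Rightarrow> bool" where
  "feasible_pol P f Y Xf N x i pol \<longleftrightarrow>
     (\<forall>k<N. \<forall>ms\<in>paths k. pprob P i ms > 0 \<longrightarrow>
        (pol_state f pol x i ms, pol (i # ms)) \<in> Y (last (i # ms))) \<and>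
     (\<forall>ms\<in>paths N. pprob P i ms > 0 \<longrightarrow> pol_state f pol x i ms \<in> Xf (last (i # ms)))"

definition cost_pol :: "('q::finite \<Rightarrow> 'q \<Rightarrow> real) \<Rightarrow> (real^'n \<Rightarrow> real^'m \<Rightarrow> 'q \<Rightarrow> real^'n)
     \<Rightarrow> (real^'n \<Rightarrow> real^'m \<Rightarrow> 'q \<Rightarrow> real) \<Rightarrow> (real^'n \<Rightarrow> 'q \<Rightarrow> real) \<Rightarrow> nat
     \<Rightarrow> real^'n \<Rightarrow> 'q \<Rightarrow> ('q list \<Rightarrow> real^'m) \<Rightarrow> real" where
  "cost_pol P f l V N x i pol =
     Ehist P i N (\<lambda>h. V (pol_state f pol x i (tl h)) (last h)) +
     (\<Sum>k<N. Ehist P i k (\<lambda>h. l (pol_state f pol x i (tl h)) (pol h) (last h)))"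

definition optimal_pol where
  "optimal_pol P f Y Xf l V N x i pol \<longleftrightarrow>
     feasible_pol P f Y Xf N x i pol \<and>
     (\<forall>pol'. feasible_pol P f Y Xf N x i pol' \<longrightarrow>
        cost_pol P f l V N x i pol \<le> cost_pol P f l V N x i pol')"

definition EMPC_law where
  "EMPC_law P f Y Xf l V N kap \<longleftrightarrow>
     (\<forall>x i. (\<exists>pol. feasible_pol P f Y Xf N x i pol) \<longrightarrow>
        (\<exists>pol. optimal_pol P f Y Xf l V N x i pol \<and> kap x i = pol [i]))"

definition loc_ms_stable where
  "loc_ms_stable P f Y Xf N kap \<longleftrightarrow>
     (\<forall>x i. (\<exists>pol. feasible_pol P f Y Xf N x i pol) \<longrightarrow>
        (\<lambda>k. Ehist P i k (\<lambda>h. (norm (cl_state f kap x i (tl h)))\<^sup>2)) \<longlonglongrightarrow> 0)"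

end

theory Submission
  imports Defs
begin



lemma finite_paths[simp]: "finite (paths k :: ('q::finite) list set)"
  using finite_lists_length_eq[of "UNIV::'q set" k] by (simp add: paths_def)

lemma paths_Suc: "paths (Suc k) = (\<lambda>(j,ms). j # ms) ` (UNIV \<times> paths k)"
  unfolding paths_def
  by (auto simp: image_iff length_Suc_conv)

lemma sum_paths_Suc:
  "(\<Sum>ms\<in>paths (Suc k). g ms) = (\<Sum>j\<in>(UNIV::'q::finite set). \<Sum>ms\<in>paths k. g (j # ms))"
proof -
  have inj: "inj_on (\<lambda>(j::'q,ms). j # ms) (UNIV \<times> paths k)"
    by (auto simp: inj_on_def)
  show ?thesis
    unfolding paths_Suc sum.reindex[OF inj] 
    by (simp add: sum.cartesian_product split_def)
qed

lemma paths_snoc: "paths (Suc k) = (\<lambda>(ms,j). ms @ [j]) ` (paths k \<times> UNIV)"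
  unfolding paths_def
  apply (auto simp: image_iff)
  subgoal for xs by (cases xs rule: rev_cases) auto
  done

lemma sum_paths_snoc:
  "(\<Sum>ms\<in>paths (Suc k). g ms) = (\<Sum>ms\<in>paths k. \<Sum>j\<in>(UNIV::'q::finite set). g (ms @ [j]))"
proof -
  have inj: "inj_on (\<lambda>(ms,j::'q). ms @ [j]) (paths k \<times> UNIV)"
    by (auto simp: inj_on_def)
  show ?thesis
    unfolding paths_snoc sum.reindex[OF inj] 
    by (simp add: sum.cartesian_product split_def)
qed

lemma pprob_snoc: "pprob P i (ms @ [j]) = pprob P i ms * P (last (i # ms)) j"
  by (induction ms arbitrary: i) auto

lemma pprob_nonneg: "stochastic P \<Longrightarrow> 0 \<le> pprob P i ms"
  by (induction ms arbitrary: i) (auto simp: stochastic_def)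

lemma sum_pprob: "stochastic P \<Longrightarrow> (\<Sum>ms\<in>paths k. pprob P i ms) = 1"
proof (induction k arbitrary: i)
  case 0 then show ?case by (simp add: paths_def)
next
  case (Suc k)
  have "(\<Sum>ms\<in>paths (Suc k). pprob P i ms) = (\<Sum>j\<in>UNIV. P i j * (\<Sum>ms\<in>paths k. pprob P j ms))"
    by (simp add: sum_paths_Suc sum_distrib_left)
  also have "\<dots> = 1" using Suc by (simp add: stochastic_def)
  finally show ?case .
qed

lemma Ehist_Suc: "Ehist P i (Suc k) g = (\<Sum>j\<in>UNIV. P i j * Ehist P j k (\<lambda>h. g (i # h)))"
  unfolding Ehist_def by (simp add: sum_paths_Suc sum_distrib_left mult.assoc)

lemma Ehist_snoc: "Ehist P i (Suc k) g = Ehist P i k (\<lambda>h. \<Sum>j\<in>UNIV. P (last h) j * g (h @ [j]))"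
  unfolding Ehist_def by (simp add: sum_paths_snoc sum_distrib_left pprob_snoc mult.assoc)

lemma Ehist_0[simp]: "Ehist P i 0 g = g [i]"
  unfolding Ehist_def by (simp add: paths_def)

lemma Ehist_mono_pos:
  fixes P :: "'q::finite \<Rightarrow> 'q \<Rightarrow> real"
  assumes "stochastic P" "\<And>ms. ms \<in> paths k \<Longrightarrow> pprob P i ms > 0 \<Longrightarrow> g (i#ms) \<le> g' (i#ms)"
  shows "Ehist P i k g \<le> Ehist P i k g'"
  unfolding Ehist_def
proof (rule sum_mono)
  fix ms :: "'q list" assume ms: "ms \<in> paths k"
  show "pprob P i ms * g (i # ms) \<le> pprob P i ms * g' (i # ms)"
  proof (cases "pprob P i ms > 0")
    case True then show ?thesis using assms(2)[OF ms] by simp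
  next
    case False then have "pprob P i ms = 0" using pprob_nonneg[OF assms(1)] 
      by (metis order_less_le)
    then show ?thesis by simp
  qed
qed

lemma Ehist_mono:
  fixes P :: "'q::finite \<Rightarrow> 'q \<Rightarrow> real"
  assumes "stochastic P" "\<And>ms. g (i#ms) \<le> g' (i#ms)"
  shows "Ehist P i k g \<le> Ehist P i k g'"
  using Ehist_mono_pos[OF assms(1)] assms(2) by blast

lemma Ehist_cong_pos:
  fixes P :: "'q::finite \<Rightarrow> 'q \<Rightarrow> real"
  assumes "stochastic P" "\<And>ms. ms \<in> paths k \<Longrightarrow> pprob P i ms > 0 \<Longrightarrow> g (i#ms) = g' (i#ms)"
  shows "Ehist P i k g = Ehist P i k g'"
  using Ehist_mono_pos[of P k i g g'] Ehist_mono_pos[of P k i g' g] assms by force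

lemma Ehist_add: "Ehist P i k (\<lambda>h. g h + g' h) = Ehist P i k g + Ehist P i k g'"
  unfolding Ehist_def by (simp add: distrib_left sum.distrib)

lemma Ehist_diff: "Ehist P i k (\<lambda>h. g h - g' h) = Ehist P i k g - Ehist P i k g'"
  unfolding Ehist_def by (simp add: right_diff_distrib sum_subtractf)

lemma Ehist_cmult: "Ehist P i k (\<lambda>h. c * g h) = c * Ehist P i k g"
  unfolding Ehist_def by (simp add: sum_distrib_left algebra_simps)

lemma Ehist_const: "stochastic P \<Longrightarrow> Ehist P i k (\<lambda>h. c) = c"
  unfolding Ehist_def by (simp add: sum_pprob flip: sum_distrib_right)

lemma Ehist_nonneg: "stochastic P \<Longrightarrow> (\<And>ms. 0 \<le> g (i#ms)) \<Longrightarrow> 0 \<le> Ehist P i k g"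
  unfolding Ehist_def by (intro sum_nonneg mult_nonneg_nonneg pprob_nonneg) auto

lemma Ehist_abs: "stochastic P \<Longrightarrow> \<bar>Ehist P i k g\<bar> \<le> Ehist P i k (\<lambda>h. \<bar>g h\<bar>)"
  unfolding Ehist_def
  by (rule order_trans[OF sum_abs]) (simp add: abs_mult pprob_nonneg)

lemma Ehist_sum: "Ehist P i k (\<lambda>h. \<Sum>a\<in>A. g a h) = (\<Sum>a\<in>A. Ehist P i k (g a))"
  unfolding Ehist_def by (simp add: sum_distrib_left sum.swap[of _ A])




lemma Ehist_CS:
  assumes "stochastic P"
  shows "(Ehist P i k (\<lambda>h. a h * b h))\<^sup>2 \<le> Ehist P i k (\<lambda>h. (a h)\<^sup>2) * Ehist P i k (\<lambda>h. (b h)\<^sup>2)"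
proof -
  have p: "\<And>ms. 0 \<le> pprob P i ms" using pprob_nonneg[OF assms] .
  have "(Ehist P i k (\<lambda>h. a h * b h)) = (\<Sum>ms\<in>paths k. (sqrt (pprob P i ms) * a (i#ms)) * (sqrt (pprob P i ms) * b (i#ms)))"
    unfolding Ehist_def
    by (rule sum.cong) (auto simp: p real_sqrt_mult[symmetric] algebra_simps)
  also have "(\<dots>)\<^sup>2 \<le> (\<Sum>ms\<in>paths k. (sqrt (pprob P i ms) * a (i#ms))\<^sup>2) * (\<Sum>ms\<in>paths k. (sqrt (pprob P i ms) * b (i#ms))\<^sup>2)"
    by (rule Cauchy_Schwarz_ineq_sum)
  also have "\<dots> = Ehist P i k (\<lambda>h. (a h)\<^sup>2) * Ehist P i k (\<lambda>h. (b h)\<^sup>2)"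
    unfolding Ehist_def by (simp add: power_mult_distrib p)
  finally show ?thesis .
qed

lemma Ehist_CS':
  assumes "stochastic P"
  shows "Ehist P i k (\<lambda>h. a h * b h) \<le> sqrt (Ehist P i k (\<lambda>h. (a h)\<^sup>2)) * sqrt (Ehist P i k (\<lambda>h. (b h)\<^sup>2))"
  using Ehist_CS[OF assms, of i k a b]
  by (metis real_le_rsqrt real_sqrt_mult)

lemma Ehist_sqrt:
  assumes "stochastic P"
  shows "Ehist P i k a \<le> sqrt (Ehist P i k (\<lambda>h. (a h)\<^sup>2))"
  using Ehist_CS'[OF assms, of i k a "\<lambda>_. 1"] by (simp add: Ehist_const[OF assms])

fun Mp :: "('q \<Rightarrow> real^'n^'n) \<Rightarrow> 'q \<Rightarrow> 'q list \<Rightarrow> real^'n^'n" where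
  "Mp G i [] = mat 1"
| "Mp G i (j # js) = Mp G j js ** G i"

lemma lin_state_Mp: "lin_state G v i ms = Mp G i ms *v v"
  by (induction ms arbitrary: v i) (auto simp: matrix_vector_mul_assoc)

lemma lin_state_diff: "lin_state G (a - b) i ms = lin_state G a i ms - lin_state G b i ms"
  by (simp add: lin_state_Mp matrix_vector_mult_diff_distrib)

lemma lin_state_add: "lin_state G (a + b) i ms = lin_state G a i ms + lin_state G b i ms"
  by (simp add: lin_state_Mp matrix_vector_right_distrib)

lemma lin_state_zero[simp]: "lin_state G 0 i ms = 0"
  by (simp add: lin_state_Mp)

definition msq :: "('q::finite \<Rightarrow> 'q \<Rightarrow> real) \<Rightarrow> ('q \<Rightarrow> real^'n^'n) \<Rightarrow> nat \<Rightarrow> 'q \<Rightarrow> real^'n \<Rightarrow> real" where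
  "msq P G k i v = Ehist P i k (\<lambda>h. (norm (lin_state G v (hd h) (tl h)))\<^sup>2)"

lemma msq_nonneg: "stochastic P \<Longrightarrow> 0 \<le> msq P G k i v"
  unfolding msq_def by (rule Ehist_nonneg) auto

lemma msq_0[simp]: "msq P G 0 i v = (norm v)\<^sup>2"
  unfolding msq_def by simp

lemma msq_Suc: "msq P G (Suc k) i v = (\<Sum>j\<in>UNIV. P i j * msq P G k j (G i *v v))"
  unfolding msq_def Ehist_Suc by (simp add: Ehist_def)

lemma norm_Mv_basis:
  fixes M :: "real^'n^'n"
  shows "norm (M *v v) \<le> norm v * (\<Sum>a\<in>UNIV. norm (M *v axis a 1))"
proof -
  have "M *v v = M *v (\<Sum>a\<in>UNIV. (v$a) *s axis a 1)" by (simp add: basis_expansion)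
  also have "\<dots> = (\<Sum>a\<in>UNIV. (v$a) *\<^sub>R (M *v axis a 1))"
    using linear_sum[OF matrix_vector_mul_linear[of M], of "\<lambda>a. (v$a) *s axis a 1" UNIV]
    by (simp add: scalar_mult_eq_scaleR matrix_vector_mult_scaleR)
  finally have "norm (M *v v) \<le> (\<Sum>a\<in>UNIV. norm ((v$a) *\<^sub>R (M *v axis a 1)))"
    by (metis norm_sum)
  also have "\<dots> \<le> (\<Sum>a\<in>UNIV. norm v * norm (M *v axis a 1))"
    by (rule sum_mono) (simp add: mult_right_mono component_le_norm_cart)
  finally show ?thesis by (simp add: sum_distrib_left)
qed




lemma msq_basis_bound:
  fixes v :: "real^'n" and P :: "'q::finite \<Rightarrow> 'q \<Rightarrow> real"
  assumes "stochastic P"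
  shows "msq P G k i v \<le> (norm v)\<^sup>2 * (real CARD('n) * (\<Sum>a\<in>UNIV. msq P G k i (axis a 1)))"
proof -
  have pw: "(norm (lin_state G v (hd h) (tl h)))\<^sup>2 \<le>
     (norm v)\<^sup>2 * (real CARD('n) * (\<Sum>a\<in>UNIV. (norm (lin_state G (axis a 1) (hd h) (tl h)))\<^sup>2))" for h
  proof -
    let ?M = "Mp G (hd h) (tl h)"
    have "norm (?M *v v) \<le> norm v * (\<Sum>a\<in>UNIV. norm (?M *v axis a 1))" by (rule norm_Mv_basis)
    then have "(norm (?M *v v))\<^sup>2 \<le> (norm v * (\<Sum>a\<in>UNIV. norm (?M *v axis a 1)))\<^sup>2"
      by (simp add: power_mono)
    also have "\<dots> = (norm v)\<^sup>2 * (\<Sum>a\<in>UNIV. norm (?M *v axis a 1))\<^sup>2" by (simp add: power_mult_distrib)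
    also have "\<dots> \<le> (norm v)\<^sup>2 * ((\<Sum>a\<in>UNIV. (norm (?M *v axis a 1))\<^sup>2) * real CARD('n))"
      by (rule mult_left_mono[OF sum_squared_le_sum_of_squares]) simp
    finally show ?thesis by (simp add: lin_state_Mp mult_ac)
  qed
  have "msq P G k i v \<le> Ehist P i k (\<lambda>h. (norm v)\<^sup>2 * (real CARD('n) * (\<Sum>a\<in>UNIV. (norm (lin_state G (axis a 1) (hd h) (tl h)))\<^sup>2)))"
    unfolding msq_def by (rule Ehist_mono[OF assms]) (use pw in blast)
  also have "\<dots> = (norm v)\<^sup>2 * (real CARD('n) * (\<Sum>a\<in>UNIV. msq P G k i (axis a 1)))"
    by (simp add: Ehist_cmult Ehist_sum msq_def)
  finally show ?thesis .
qed

definition mu :: "('q::finite \<Rightarrow> 'q \<Rightarrow> real) \<Rightarrow> ('q \<Rightarrow> real^'n^'n) \<Rightarrow> nat \<Rightarrow> real" where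
  "mu P G k = real CARD('n) * (\<Sum>i\<in>UNIV. \<Sum>a\<in>UNIV. msq P G k i (axis a 1))"

lemma mu_nonneg: "stochastic P \<Longrightarrow> 0 \<le> mu P G k"
  unfolding mu_def by (intro mult_nonneg_nonneg sum_nonneg msq_nonneg) auto

lemma msq_mu:
  fixes v :: "real^'n" and P :: "'q::finite \<Rightarrow> 'q \<Rightarrow> real"
  assumes "stochastic P"
  shows "msq P G k i v \<le> mu P G k * (norm v)\<^sup>2"
proof -
  have "(\<Sum>a\<in>UNIV. msq P G k i (axis a 1)) \<le> (\<Sum>i\<in>UNIV. \<Sum>a\<in>UNIV. msq P G k i (axis a 1))"
    by (rule member_le_sum) (auto intro!: sum_nonneg msq_nonneg assms)
  then have "(norm v)\<^sup>2 * (real CARD('n) * (\<Sum>a\<in>UNIV. msq P G k i (axis a 1))) \<le> (norm v)\<^sup>2 * mu P G k"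
    unfolding mu_def by (intro mult_left_mono) auto
  with msq_basis_bound[OF assms, of G k i v] show ?thesis by (simp add: mult_ac)
qed

lemma mu_tendsto:
  assumes "MJLS_ms_stable P G"
  shows "mu P G \<longlonglongrightarrow> 0"
proof -
  have "\<And>i a. (\<lambda>k. msq P G k i (axis a 1)) \<longlonglongrightarrow> 0"
    using assms unfolding MJLS_ms_stable_def msq_def by blast
  then have "(\<lambda>k. \<Sum>i\<in>UNIV. \<Sum>a\<in>UNIV. msq P G k i (axis a 1)) \<longlonglongrightarrow> 0"
    by (auto intro!: tendsto_null_sum)
  then show ?thesis unfolding mu_def by (rule tendsto_mult_right_zero)
qed

lemma msq_split:
  fixes P :: "'q::finite \<Rightarrow> 'q \<Rightarrow> real"
  assumes "stochastic P"
  shows "msq P G (k + n) i v \<le> mu P G n * msq P G k i v"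
proof (induction k arbitrary: i v)
  case 0 then show ?case using msq_mu[OF assms] by simp
next
  case (Suc k)
  have "msq P G (Suc k + n) i v = (\<Sum>j\<in>UNIV. P i j * msq P G (k + n) j (G i *v v))"
    by (simp add: msq_Suc)
  also have "\<dots> \<le> (\<Sum>j\<in>UNIV. P i j * (mu P G n * msq P G k j (G i *v v)))"
    by (intro sum_mono mult_left_mono Suc) (use assms in \<open>auto simp: stochastic_def\<close>)
  also have "\<dots> = mu P G n * msq P G (Suc k) i v"
    by (simp add: msq_Suc sum_distrib_left mult_ac)
  finally show ?case .
qed

lemma msq_exp:
  fixes P :: "'q::finite \<Rightarrow> 'q \<Rightarrow> real"
  assumes "stochastic P" "MJLS_ms_stable P G"
  shows "\<exists>C r. 0 \<le> C \<and> 0 < r \<and> r < 1 \<and> (\<forall>k i v. msq P G k i v \<le> C * r ^ k * (norm v)\<^sup>2)"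
proof -
  from mu_tendsto[OF assms(2)] have "eventually (\<lambda>k. mu P G k < 1/2) sequentially"
    by (rule order_tendstoD) simp
  then obtain N0 where N0: "\<And>k. k \<ge> N0 \<Longrightarrow> mu P G k < 1/2" by (auto simp: eventually_sequentially)
  define n0 where "n0 = Suc N0"
  have n0: "n0 > 0" "mu P G n0 \<le> 1/2" using N0[of n0] by (auto simp: n0_def)
  define C where "C = Max (mu P G ` {..<n0})"
  have C: "mu P G s \<le> C" if "s < n0" for s unfolding C_def using that by (intro Max_ge) auto
  have C0: "0 \<le> C" using C[of 0] mu_nonneg[OF assms(1), of G 0] n0 by linarith
  have step: "msq P G (q * n0 + s) i v \<le> (1/2)^q * (C * (norm v)\<^sup>2)" if "s < n0" for q s i v
  proof (induction q arbitrary: i v)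
    case 0 
    have "msq P G s i v \<le> mu P G s * (norm v)\<^sup>2" by (rule msq_mu[OF assms(1)])
    also have "\<dots> \<le> C * (norm v)\<^sup>2" using C[OF that] by (simp add: mult_right_mono)
    finally show ?case by simp
  next
    case (Suc q)
    have "msq P G (Suc q * n0 + s) i v = msq P G ((q * n0 + s) + n0) i v" by (simp add: algebra_simps)
    also have "\<dots> \<le> mu P G n0 * msq P G (q * n0 + s) i v" by (rule msq_split[OF assms(1)])
    also have "\<dots> \<le> (1/2) * ((1/2)^q * (C * (norm v)\<^sup>2))"
      using Suc[of i v] n0(2) mu_nonneg[OF assms(1), of G n0] msq_nonneg[OF assms(1)]
      by (intro mult_mono) auto
    finally show ?case by simp
  qed
  define r where "r = root n0 (1/2)"
  have r: "0 < r" "r < 1" "r ^ n0 = 1/2" using n0(1) by (auto simp: r_def real_root_lt_1_iff)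
  have pw: "(1/2::real) ^ (k div n0) \<le> 2 * r ^ k" for k
  proof -
    have "r ^ k = (r ^ n0) ^ (k div n0) * r ^ (k mod n0)"
      by (metis mult.commute power_add power_mult div_mult_mod_eq)
    also have "\<dots> = (1/2) ^ (k div n0) * r ^ (k mod n0)" by (simp add: r(3))
    also have "\<dots> \<ge> (1/2) ^ (k div n0) * r ^ n0"
      using r n0(1) by (intro mult_left_mono power_decreasing) (auto intro: less_imp_le)
    finally show ?thesis using r(3) by simp
  qed
  show ?thesis
  proof (intro exI conjI allI)
    fix k i v
    have "msq P G k i v = msq P G ((k div n0) * n0 + k mod n0) i v" by simp
    also have "\<dots> \<le> (1/2)^(k div n0) * (C * (norm v)\<^sup>2)" by (rule step) (use n0 in simp)
    also have "\<dots> \<le> (2 * r ^ k) * (C * (norm v)\<^sup>2)" by (rule mult_right_mono[OF pw]) (use C0 in simp)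
    finally show "msq P G k i v \<le> (2 * C) * r ^ k * (norm v)\<^sup>2" by (simp add: mult_ac)
  qed (use C0 r in auto)
qed




definition QL :: "('q \<Rightarrow> real) \<Rightarrow> ('q \<Rightarrow> real^'n) \<Rightarrow> real^'n \<Rightarrow> 'q \<Rightarrow> real" where
  "QL a c z \<theta> = a \<theta> * (norm z)\<^sup>2 + c \<theta> \<bullet> z"

definition tq :: "('q::finite \<Rightarrow> 'q \<Rightarrow> real) \<Rightarrow> ('q \<Rightarrow> real^'n^'n) \<Rightarrow> ('q \<Rightarrow> real) \<Rightarrow> ('q \<Rightarrow> real^'n)
   \<Rightarrow> nat \<Rightarrow> real^'n \<Rightarrow> 'q \<Rightarrow> real" where
  "tq P G a c k v i = Ehist P i k (\<lambda>h. QL a c (lin_state G v (hd h) (tl h)) (last h))"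

lemma QL_diff_pw:
  fixes a :: "'q::finite \<Rightarrow> real"
  shows "\<bar>QL a c z \<theta> - QL a c z' \<theta>\<bar> \<le> (\<Sum>t\<in>UNIV. \<bar>a t\<bar>) * (norm (z - z') * norm (z + z')) + (\<Sum>t\<in>UNIV. norm (c t)) * norm (z - z')"
proof -
  have e: "QL a c z \<theta> - QL a c z' \<theta> = a \<theta> * ((z - z') \<bullet> (z + z')) + c \<theta> \<bullet> (z - z')"
    unfolding QL_def power2_norm_eq_inner by (simp add: algebra_simps inner_commute)
  have "\<bar>a \<theta> * ((z - z') \<bullet> (z + z'))\<bar> \<le> (\<Sum>t\<in>UNIV. \<bar>a t\<bar>) * (norm (z - z') * norm (z + z'))"
    unfolding abs_mult
    by (intro mult_mono member_le_sum Cauchy_Schwarz_ineq2) auto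
  moreover have "\<bar>c \<theta> \<bullet> (z - z')\<bar> \<le> (\<Sum>t\<in>UNIV. norm (c t)) * norm (z - z')"
    by (rule order_trans[OF Cauchy_Schwarz_ineq2]) (intro mult_right_mono member_le_sum, auto)
  ultimately show ?thesis unfolding e by linarith
qed

lemma tq_diff_bound:
  fixes P :: "'q::finite \<Rightarrow> 'q \<Rightarrow> real"
  assumes sto: "stochastic P" and C: "0 \<le> C" "0 < r" and ex: "\<And>k i v. msq P G k i v \<le> C * r ^ k * (norm v)\<^sup>2"
  shows "\<bar>tq P G a c k y i - tq P G a c k y' i\<bar> \<le>
     (\<Sum>t\<in>UNIV. \<bar>a t\<bar>) * (C * r ^ k * (norm (y - y') * norm (y + y')))
     + (\<Sum>t\<in>UNIV. norm (c t)) * (sqrt C * sqrt r ^ k * norm (y - y'))"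
proof -
  define A where "A = (\<Sum>t\<in>UNIV. \<bar>a t\<bar>)"
  define Cc where "Cc = (\<Sum>t\<in>UNIV. norm (c t))"
  have A0: "0 \<le> A" "0 \<le> Cc" unfolding A_def Cc_def by (auto intro: sum_nonneg)
  let ?d = "\<lambda>h. norm (lin_state G (y - y') (hd h) (tl h))"
  let ?s = "\<lambda>h. norm (lin_state G (y + y') (hd h) (tl h))"
  have "\<bar>tq P G a c k y i - tq P G a c k y' i\<bar> =
     \<bar>Ehist P i k (\<lambda>h. QL a c (lin_state G y (hd h) (tl h)) (last h) - QL a c (lin_state G y' (hd h) (tl h)) (last h))\<bar>"
    unfolding tq_def Ehist_diff ..
  also have "\<dots> \<le> Ehist P i k (\<lambda>h. \<bar>QL a c (lin_state G y (hd h) (tl h)) (last h) - QL a c (lin_state G y' (hd h) (tl h)) (last h)\<bar>)"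
    by (rule Ehist_abs[OF sto])
  also have "\<dots> \<le> Ehist P i k (\<lambda>h. A * (?d h * ?s h) + Cc * ?d h)"
    by (rule Ehist_mono[OF sto])
       (use QL_diff_pw[of a c] in \<open>simp add: A_def Cc_def lin_state_diff lin_state_add\<close>)
  also have "\<dots> = A * Ehist P i k (\<lambda>h. ?d h * ?s h) + Cc * Ehist P i k ?d"
    by (simp add: Ehist_add Ehist_cmult)
  also have "\<dots> \<le> A * (C * r ^ k * (norm (y - y') * norm (y + y'))) + Cc * (sqrt C * sqrt r ^ k * norm (y - y'))"
  proof (intro add_mono mult_left_mono A0)
    have "Ehist P i k (\<lambda>h. ?d h * ?s h) \<le> sqrt (msq P G k i (y - y')) * sqrt (msq P G k i (y + y'))"
      unfolding msq_def by (rule Ehist_CS'[OF sto])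
    also have "\<dots> \<le> sqrt (C * r ^ k * (norm (y - y'))\<^sup>2) * sqrt (C * r ^ k * (norm (y + y'))\<^sup>2)"
      using C by (intro mult_mono real_sqrt_le_mono ex) (auto simp: msq_nonneg[OF sto])
    also have "\<dots> = C * r ^ k * (norm (y - y') * norm (y + y'))"
      using C by (simp add: real_sqrt_mult real_sqrt_power[symmetric] mult_ac)
    finally show "Ehist P i k (\<lambda>h. ?d h * ?s h) \<le> C * r ^ k * (norm (y - y') * norm (y + y'))" .
    have "Ehist P i k ?d \<le> sqrt (msq P G k i (y - y'))"
      unfolding msq_def by (rule Ehist_sqrt[OF sto])
    also have "\<dots> \<le> sqrt (C * r ^ k * (norm (y - y'))\<^sup>2)"
      by (intro real_sqrt_le_mono ex)
    also have "\<dots> = sqrt C * sqrt r ^ k * norm (y - y')"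
      using C by (simp add: real_sqrt_mult real_sqrt_power)
    finally show "Ehist P i k ?d \<le> sqrt C * sqrt r ^ k * norm (y - y')" .
  qed
  finally show ?thesis unfolding A_def Cc_def .
qed

lemma tq_zero[simp]: "tq P G a c k 0 i = 0"
  unfolding tq_def Ehist_def by (simp add: QL_def)

lemma summable_bound:
  fixes f :: "nat \<Rightarrow> real"
  assumes "summable b" "\<And>k. \<bar>f k\<bar> \<le> b k"
  shows "summable f" "\<bar>suminf f\<bar> \<le> suminf b"
proof -
  show sf: "summable f" by (rule summable_comparison_test[of f b]) (use assms in auto)
  have "summable (\<lambda>k. \<bar>f k\<bar>)" by (rule summable_comparison_test[of _ b]) (use assms in auto)
  then have "\<bar>suminf f\<bar> \<le> (\<Sum>k. \<bar>f k\<bar>)" by (rule summable_rabs)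
  also have "\<dots> \<le> suminf b" by (rule suminf_le) (use assms \<open>summable (\<lambda>k. \<bar>f k\<bar>)\<close> in auto)
  finally show "\<bar>suminf f\<bar> \<le> suminf b" .
qed

lemma tq_series:
  fixes P :: "'q::finite \<Rightarrow> 'q \<Rightarrow> real" and G :: "'q \<Rightarrow> real^'n^'n"
  assumes sto: "stochastic P" and C: "0 \<le> C" "0 < r" "r < 1" and ex: "\<And>k i v. msq P G k i v \<le> C * r ^ k * (norm v)\<^sup>2"
  shows "summable (\<lambda>k. tq P G a c k y i)"
    "\<bar>(\<Sum>k. tq P G a c k y i) - (\<Sum>k. tq P G a c k y' i)\<bar> \<le>
     (\<Sum>t\<in>UNIV. \<bar>a t\<bar>) * (C / (1 - r)) * (norm (y - y') * norm (y + y'))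
     + (\<Sum>t\<in>UNIV. norm (c t)) * (sqrt C / (1 - sqrt r)) * norm (y - y')"
proof -
  define A where "A = (\<Sum>t\<in>UNIV. \<bar>a t\<bar>)"
  define Cc where "Cc = (\<Sum>t\<in>UNIV. norm (c t))"
  define b where "b = (\<lambda>(y::real^'n) y' k. A * (C * r ^ k * (norm (y - y') * norm (y + y')))
     + Cc * (sqrt C * sqrt r ^ k * norm (y - y')))"
  have sr: "sqrt r < 1" "0 \<le> sqrt r" using C by auto
  have g1: "(\<lambda>k. r ^ k) sums (1 / (1 - r))" using C by (intro geometric_sums) auto
  have g2: "(\<lambda>k. sqrt r ^ k) sums (1 / (1 - sqrt r))" using sr by (intro geometric_sums) auto
  have bs: "(b y y') sums (A * (C / (1 - r)) * (norm (y - y') * norm (y + y'))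
     + Cc * (sqrt C / (1 - sqrt r)) * norm (y - y'))" for y y'
  proof -
    have "(\<lambda>k. A * (C * (norm (y - y') * norm (y + y'))) * r ^ k) sums (A * (C * (norm (y - y') * norm (y + y'))) * (1 / (1 - r)))"
      by (rule sums_mult[OF g1])
    moreover have "(\<lambda>k. Cc * (sqrt C * norm (y - y')) * sqrt r ^ k) sums (Cc * (sqrt C * norm (y - y')) * (1 / (1 - sqrt r)))"
      by (rule sums_mult[OF g2])
    ultimately have "(\<lambda>k. A * (C * (norm (y - y') * norm (y + y'))) * r ^ k + Cc * (sqrt C * norm (y - y')) * sqrt r ^ k)
       sums (A * (C * (norm (y - y') * norm (y + y'))) * (1 / (1 - r)) + Cc * (sqrt C * norm (y - y')) * (1 / (1 - sqrt r)))"
      by (rule sums_add)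
    then show ?thesis unfolding b_def by (simp add: mult_ac)
  qed
  have bnd: "\<bar>tq P G a c k y i - tq P G a c k y' i\<bar> \<le> b y y' k" for y y' k
    unfolding b_def A_def Cc_def by (rule tq_diff_bound[OF sto C(1,2) ex])
  show sm: "summable (\<lambda>k. tq P G a c k y i)" for y :: "real^'n"
    using summable_bound(1)[OF sums_summable[OF bs[of y 0]], of "\<lambda>k. tq P G a c k y i"] bnd[where y=y and y'=0] by simp
  have "\<bar>(\<Sum>k. tq P G a c k y i - tq P G a c k y' i)\<bar> \<le> suminf (b y y')"
    by (rule summable_bound(2)[OF sums_summable[OF bs] bnd])
  also have "suminf (b y y') = A * (C / (1 - r)) * (norm (y - y') * norm (y + y'))
     + Cc * (sqrt C / (1 - sqrt r)) * norm (y - y')" using bs by (rule sums_unique[symmetric])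
  finally show "\<bar>(\<Sum>k. tq P G a c k y i) - (\<Sum>k. tq P G a c k y' i)\<bar> \<le>
     (\<Sum>t\<in>UNIV. \<bar>a t\<bar>) * (C / (1 - r)) * (norm (y - y') * norm (y + y'))
     + (\<Sum>t\<in>UNIV. norm (c t)) * (sqrt C / (1 - sqrt r)) * norm (y - y')"
    using suminf_diff[OF sm sm, of y y'] unfolding A_def Cc_def by simp
qed

lemma tq_Suc: "tq P G a c (Suc k) v i = (\<Sum>j\<in>UNIV. P i j * tq P G a c k (G i *v v) j)"
  unfolding tq_def Ehist_Suc by (simp add: Ehist_def)

lemma tq_0: "tq P G a c 0 v i = QL a c v i"
  unfolding tq_def by simp

lemma tq_shift:
  fixes P :: "'q::finite \<Rightarrow> 'q \<Rightarrow> real"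
  assumes sm: "\<And>v i. summable (\<lambda>k. tq P G a c k v i)"
  shows "(\<Sum>j\<in>UNIV. P i j * (\<Sum>k. tq P G a c k (G i *v v) j)) = (\<Sum>k. tq P G a c k v i) - QL a c v i"
proof -
  have "(\<Sum>k. tq P G a c k v i) = tq P G a c 0 v i + (\<Sum>k. tq P G a c (Suc k) v i)"
    using suminf_split_head[OF sm] by simp
  also have "(\<Sum>k. tq P G a c (Suc k) v i) = (\<Sum>k. \<Sum>j\<in>UNIV. P i j * tq P G a c k (G i *v v) j)"
    by (simp add: tq_Suc)
  also have "\<dots> = (\<Sum>j\<in>UNIV. \<Sum>k. P i j * tq P G a c k (G i *v v) j)"
    by (rule suminf_sum) (intro summable_mult sm)
  also have "\<dots> = (\<Sum>j\<in>UNIV. P i j * (\<Sum>k. tq P G a c k (G i *v v) j))"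
    by (intro sum.cong refl) (rule suminf_mult[OF sm])
  finally show ?thesis by (simp add: tq_0)
qed




lemma fhat_deriv0:
  fixes f :: "real^'n \<Rightarrow> real^'m \<Rightarrow> 'q \<Rightarrow> real^'n"
  assumes AB: "((\<lambda>z. f (fst z) (snd z) i) has_derivative (\<lambda>z. A i *v fst z + B i *v snd z)) (at (0, 0))"
  shows "(fhat f K i has_derivative (\<lambda>h. (A i + B i ** K i) *v h)) (at 0)"
proof -
  have inner: "((\<lambda>x. (x, K i *v x)) has_derivative (\<lambda>h. (h, K i *v h))) (at (0::real^'n))"
    by (intro derivative_intros) (auto intro: bounded_linear.has_derivative)
  have "((\<lambda>x. f (fst (x, K i *v x)) (snd (x, K i *v x)) i) has_derivative
        (\<lambda>h. A i *v fst (h, K i *v h) + B i *v snd (h, K i *v h))) (at 0)"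
    using has_derivative_compose[OF inner, of "\<lambda>z. f (fst z) (snd z) i" "\<lambda>z. A i *v fst z + B i *v snd z"] AB
    by simp
  then show ?thesis
    unfolding fhat_def by (simp add: matrix_vector_mult_add_rdistrib matrix_vector_mul_assoc)
qed

lemma fhat_lin_bound:
  fixes f :: "real^'n \<Rightarrow> real^'m \<Rightarrow> 'q \<Rightarrow> real^'n"
  assumes AB: "((\<lambda>z. f (fst z) (snd z) i) has_derivative (\<lambda>z. A i *v fst z + B i *v snd z)) (at (0, 0))"
    and sm: "smooth_map \<beta> (fhat f K i)" and f0: "f 0 0 i = 0"
  shows "norm (fhat f K i x - (A i + B i ** K i) *v x) \<le> \<bar>\<beta>\<bar> * (norm x)\<^sup>2"
proof -
  obtain D where D: "\<And>x. (fhat f K i has_derivative D x) (at x)"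
     "\<And>x y. onorm (\<lambda>h. D x h - D y h) \<le> \<beta> * norm (x - y)"
    using sm unfolding smooth_map_def by blast
  have D0: "D 0 = (\<lambda>h. (A i + B i ** K i) *v h)"
    by (rule has_derivative_unique[OF D(1) fhat_deriv0[where A=A and B=B and i=i and f=f and K=K, OF AB]])
  have "norm (fhat f K i x - fhat f K i 0 - D 0 (x - 0)) \<le> norm (x - 0) * (\<bar>\<beta>\<bar> * norm x)"
  proof (rule differentiable_bound_linearization[where S="cball 0 (norm x)" and f'=D])
    fix t :: real assume "t \<in> {0..1}"
    then show "0 + t *\<^sub>R (x - 0) \<in> cball 0 (norm x)" by (auto simp: mult_left_le_one_le)
  next
    fix y assume "y \<in> cball (0::real^'n) (norm x)"
    then have "onorm (D y - D 0) \<le> \<beta> * norm (y - 0)" using D(2)[of y 0] by (simp add: fun_diff_def)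
    also have "\<dots> \<le> \<bar>\<beta>\<bar> * norm x" using \<open>y \<in> _\<close> by (intro mult_mono) auto
    finally show "onorm (D y - D 0) \<le> \<bar>\<beta>\<bar> * norm x" .
  qed (auto intro: has_derivative_at_withinI D(1))
  moreover have "fhat f K i 0 = 0" unfolding fhat_def using f0 by simp
  ultimately show ?thesis by (simp add: D0 power2_eq_square mult_ac)
qed

lemma lbar_bound:
  fixes l :: "real^'n \<Rightarrow> real^'m \<Rightarrow> 'q \<Rightarrow> real"
  assumes sm: "smooth_scalar \<beta> (\<lambda>x. lbar l K x i)"
  shows "lbar l K x i \<le> grad0 (\<lambda>y. lbar l K y i) \<bullet> x + \<bar>\<beta>\<bar> * (norm x)\<^sup>2"
proof -
  obtain g where g: "\<And>x. ((\<lambda>x. lbar l K x i) has_derivative (\<lambda>h. g x \<bullet> h)) (at x)"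
     "\<And>x y. norm (g x - g y) \<le> \<beta> * norm (x - y)"
    using sm unfolding smooth_scalar_def by blast
  have gr: "grad0 (\<lambda>y. lbar l K y i) = g 0"
    unfolding grad0_def
  proof (rule the_equality)
    fix g' assume "((\<lambda>x. lbar l K x i) has_derivative (\<lambda>h. g' \<bullet> h)) (at 0)"
    from has_derivative_unique[OF this g(1)] have "\<And>h. g' \<bullet> h = g 0 \<bullet> h" by metis
    then have "(g' - g 0) \<bullet> h = 0" for h by (simp add: inner_diff_left)
    from this[of "g' - g 0"] show "g' = g 0" by simp
  qed (rule g(1))
  have "norm (lbar l K x i - lbar l K 0 i - g 0 \<bullet> (x - 0)) \<le> norm (x - 0) * (\<bar>\<beta>\<bar> * norm x)"
  proof (rule differentiable_bound_linearization[where S="cball 0 (norm x)" and f'="\<lambda>y h. g y \<bullet> h"])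
    fix t :: real assume "t \<in> {0..1}"
    then show "0 + t *\<^sub>R (x - 0) \<in> cball 0 (norm x)" by (auto simp: mult_left_le_one_le)
  next
    fix y assume y: "y \<in> cball (0::real^'n) (norm x)"
    have "onorm ((\<lambda>h. g y \<bullet> h) - (\<lambda>h. g 0 \<bullet> h)) \<le> norm (g y - g 0)"
      by (rule onorm_le) (simp add: fun_diff_def inner_diff_left[symmetric] Cauchy_Schwarz_ineq2 del: inner_diff_left)
    also have "\<dots> \<le> \<beta> * norm (y - 0)" by (rule g(2))
    also have "\<dots> \<le> \<bar>\<beta>\<bar> * norm x" using y by (intro mult_mono) auto
    finally show "onorm ((\<lambda>h. g y \<bullet> h) - (\<lambda>h. g 0 \<bullet> h)) \<le> \<bar>\<beta>\<bar> * norm x" .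
  qed (auto intro: has_derivative_at_withinI g(1))
  moreover have "lbar l K 0 i = 0" unfolding lbar_def by simp
  ultimately show ?thesis unfolding gr by (simp add: power2_eq_square mult_ac abs_le_iff)
qed




lemma part1:
  fixes P :: "'q::finite \<Rightarrow> 'q \<Rightarrow> real"
    and f :: "real^'n \<Rightarrow> real^'m \<Rightarrow> 'q \<Rightarrow> real^'n"
    and l :: "real^'n \<Rightarrow> real^'m \<Rightarrow> 'q \<Rightarrow> real"
    and A :: "'q \<Rightarrow> real^'n^'n" and B :: "'q \<Rightarrow> real^'m^'n"
    and K :: "'q \<Rightarrow> real^'n^'m"
    and \<beta>f \<beta>l :: "'q \<Rightarrow> real"
  assumes sto: "stochastic P"
    and f0: "\<And>i. f 0 0 i = 0"
    and AB: "\<And>i. ((\<lambda>z. f (fst z) (snd z) i) has_derivative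
                  (\<lambda>z. A i *v fst z + B i *v snd z)) (at (0, 0))"
    and K_mss: "MJLS_ms_stable P (\<lambda>i. A i + B i ** K i)"
    and fhat_smooth: "\<And>i. smooth_map (\<beta>f i) (fhat f K i)"
    and lbar_smooth: "\<And>i. smooth_scalar (\<beta>l i) (\<lambda>x. lbar l K x i)"
  shows "\<exists>\<delta>>0. \<exists>\<alpha>>0.
    (\<forall>x\<in>ball 0 \<delta>. \<forall>i.
        (\<Sum>j\<in>UNIV. P i j * Vf P (\<lambda>i. A i + B i ** K i) l K \<beta>l \<alpha> (fhat f K i x) j)
          - Vf P (\<lambda>i. A i + B i ** K i) l K \<beta>l \<alpha> x i
        \<le> - lbar l K x i) \<and> \<delta> \<le> 1 \<and>
    (\<exists>Vb. \<forall>y j. norm y < \<delta> \<longrightarrow> - Vb \<le> Vf P (\<lambda>i. A i + B i ** K i) l K \<beta>l \<alpha> y j)"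
proof -
  define G where "G = (\<lambda>i. A i + B i ** K i)"
  obtain C r where Cr: "0 \<le> C" "0 < r" "r < 1" and ex: "\<And>k i v. msq P G k i v \<le> C * r ^ k * (norm v)\<^sup>2"
    using msq_exp[OF sto K_mss[folded G_def]] by blast
  define g where "g = (\<lambda>\<theta>. grad0 (\<lambda>y. lbar l K y \<theta>))"
  define a where "a = (\<lambda>\<alpha> \<theta>. (\<alpha> + \<beta>l \<theta>) / 2)"
  have Vf_eq: "Vf P G l K \<beta>l \<alpha> x i = (\<Sum>k. tq P G (a \<alpha>) g k x i)" for \<alpha> x i
    unfolding Vf_def tq_def lq_def QL_def a_def g_def ..
  have lq_eq: "lq l K \<beta>l \<alpha> x i = QL (a \<alpha>) g x i" for \<alpha> x i
    unfolding lq_def QL_def a_def g_def ..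
  note ser = tq_series[OF sto Cr ex]
  define Bl where "Bl = (\<Sum>\<theta>\<in>UNIV. \<bar>\<beta>l \<theta>\<bar>)"
  define Bf where "Bf = (\<Sum>\<theta>\<in>UNIV. \<bar>\<beta>f \<theta>\<bar>)"
  define NG where "NG = (\<Sum>\<theta>\<in>UNIV. onorm ((*v) (G \<theta>)))"
  define K1 where "K1 = C / (1 - r)"
  define K2 where "K2 = (\<Sum>t\<in>UNIV. norm (g t)) * (sqrt C / (1 - sqrt r))"
  have Bl: "\<bar>\<beta>l i\<bar> \<le> Bl" "0 \<le> Bl" for i unfolding Bl_def by (auto intro: member_le_sum sum_nonneg)
  have Bf: "\<bar>\<beta>f i\<bar> \<le> Bf" "0 \<le> Bf" for i unfolding Bf_def by (auto intro: member_le_sum sum_nonneg)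
  have NG: "onorm ((*v) (G i)) \<le> NG" "0 \<le> NG" for i unfolding NG_def
    by (auto intro!: member_le_sum sum_nonneg onorm_pos_le)
  have K1: "0 \<le> K1" unfolding K1_def using Cr by auto
  have K2: "0 \<le> K2" unfolding K2_def using Cr by (auto intro!: mult_nonneg_nonneg sum_nonneg divide_nonneg_pos)
  define \<alpha> where "\<alpha> = 3 * Bl + 2 * K2 * Bf + 2"
  have \<alpha>0: "\<alpha> > 0" 
  proof -
    have "0 \<le> K2 * Bf" using K2 Bf(2) by simp
    then show ?thesis unfolding \<alpha>_def using Bl(2) by simp
  qed
  define A\<alpha> where "A\<alpha> = (\<Sum>t\<in>UNIV. \<bar>a \<alpha> t\<bar>)"
  have A\<alpha>: "0 \<le> A\<alpha>" unfolding A\<alpha>_def by (auto intro: sum_nonneg)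
  define M where "M = A\<alpha> * K1 * Bf * (Bf + 2 * NG)"
  have M: "0 \<le> M" unfolding M_def using A\<alpha> K1 Bf NG by auto
  define \<delta> where "\<delta> = 1 / (M + 1)"
  have \<delta>: "0 < \<delta>" "\<delta> \<le> 1" "M * \<delta> \<le> 1" using M by (auto simp: \<delta>_def field_simps)
  have diff: "\<bar>Vf P G l K \<beta>l \<alpha> y j - Vf P G l K \<beta>l \<alpha> y' j\<bar> \<le>
      A\<alpha> * K1 * (norm (y - y') * norm (y + y')) + K2 * norm (y - y')" for y y' j
    unfolding Vf_eq A\<alpha>_def K1_def K2_def using ser(2)[of "a \<alpha>" g y j y'] by (simp add: mult_ac)
  have Vf0: "Vf P G l K \<beta>l \<alpha> 0 j = 0" for j unfolding Vf_eq by simp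
  have part_a: "(\<Sum>j\<in>UNIV. P i j * Vf P G l K \<beta>l \<alpha> (fhat f K i x) j) - Vf P G l K \<beta>l \<alpha> x i
        \<le> - lbar l K x i" if x: "norm x < \<delta>" for x i
  proof -
    define y where "y = fhat f K i x"
    define y' where "y' = G i *v x"
    define nx where "nx = norm x"
    have "M * nx \<le> M * \<delta>" using x M unfolding nx_def by (intro mult_left_mono) auto
    then have nx: "0 \<le> nx" "nx \<le> 1" "M * nx \<le> 1" using x \<delta> M unfolding nx_def
      by auto
    have nd: "norm (y - y') \<le> Bf * nx\<^sup>2"
      using fhat_lin_bound[where A=A and B=B and i=i and f=f and K=K and x=x, OF AB fhat_smooth f0] Bf(1)[of i]
      unfolding y_def y'_def G_def nx_def
      by (meson order_trans mult_right_mono zero_le_power2)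
    have ny': "norm y' \<le> NG * nx"
      unfolding y'_def nx_def
      by (rule order_trans[OF onorm[OF matrix_vector_mul_bounded_linear]]) (intro mult_right_mono NG, auto)
    have ns: "norm (y + y') \<le> (Bf + 2 * NG) * nx"
    proof -
      have "norm (y + y') = norm ((y - y') + 2 *\<^sub>R y')" by (simp add: algebra_simps scaleR_2)
      also have "\<dots> \<le> norm (y - y') + 2 * norm y'" by (rule order_trans[OF norm_triangle_ineq]) simp
      also have "\<dots> \<le> Bf * nx\<^sup>2 + 2 * (NG * nx)" using nd ny' by linarith
      also have "\<dots> \<le> Bf * nx + 2 * (NG * nx)"
        using nx Bf(2) by (intro add_right_mono mult_left_mono) (auto simp: power2_eq_square mult_left_le_one_le)
      finally show ?thesis by (simp add: algebra_simps)
    qed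
    define E where "E = A\<alpha> * K1 * (norm (y - y') * norm (y + y')) + K2 * norm (y - y')"
    have E: "E \<le> nx\<^sup>2 + K2 * Bf * nx\<^sup>2"
    proof -
      have "norm (y - y') * norm (y + y') \<le> (Bf * nx\<^sup>2) * ((Bf + 2 * NG) * nx)"
        using nd ns Bf(2) by (intro mult_mono) auto
      then have "A\<alpha> * K1 * (norm (y - y') * norm (y + y')) \<le> A\<alpha> * K1 * ((Bf * nx\<^sup>2) * ((Bf + 2 * NG) * nx))"
        using A\<alpha> K1 by (intro mult_left_mono) auto
      also have "\<dots> = (M * nx) * nx\<^sup>2" unfolding M_def by (simp add: algebra_simps power2_eq_square)
      also have "\<dots> \<le> 1 * nx\<^sup>2" using nx by (intro mult_right_mono) auto
      finally have 1: "A\<alpha> * K1 * (norm (y - y') * norm (y + y')) \<le> nx\<^sup>2" by simp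
      have 2: "K2 * norm (y - y') \<le> K2 * (Bf * nx\<^sup>2)" using nd K2 by (intro mult_left_mono)
      show ?thesis using 1 2 unfolding E_def by (simp add: mult_ac)
    qed
    have sumE: "(\<Sum>j\<in>UNIV. P i j * (Vf P G l K \<beta>l \<alpha> y j - Vf P G l K \<beta>l \<alpha> y' j)) \<le> E"
    proof -
      have "(\<Sum>j\<in>UNIV. P i j * (Vf P G l K \<beta>l \<alpha> y j - Vf P G l K \<beta>l \<alpha> y' j)) \<le> (\<Sum>j\<in>UNIV. P i j * E)"
        using sto diff[where y=y and y'=y'] unfolding E_def stochastic_def
        by (intro sum_mono mult_left_mono) (auto simp: abs_le_iff)
      also have "\<dots> = E" using sto by (simp add: stochastic_def flip: sum_distrib_right)
      finally show ?thesis .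
    qed
    have shift: "(\<Sum>j\<in>UNIV. P i j * Vf P G l K \<beta>l \<alpha> y' j) = Vf P G l K \<beta>l \<alpha> x i - QL (a \<alpha>) g x i"
      unfolding Vf_eq y'_def by (rule tq_shift) (rule ser(1))
    have lb: "lbar l K x i \<le> g i \<bullet> x + \<bar>\<beta>l i\<bar> * nx\<^sup>2"
      unfolding g_def nx_def by (rule lbar_bound[OF lbar_smooth])
    have "(\<Sum>j\<in>UNIV. P i j * Vf P G l K \<beta>l \<alpha> y j) - Vf P G l K \<beta>l \<alpha> x i
        = (\<Sum>j\<in>UNIV. P i j * (Vf P G l K \<beta>l \<alpha> y j - Vf P G l K \<beta>l \<alpha> y' j)) - QL (a \<alpha>) g x i"
      using shift by (simp add: right_diff_distrib sum_subtractf)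
    also have "\<dots> \<le> nx\<^sup>2 + K2 * Bf * nx\<^sup>2 - ((\<alpha> + \<beta>l i) / 2 * nx\<^sup>2 + g i \<bullet> x)"
      using sumE E unfolding QL_def a_def nx_def by linarith
    also have "\<dots> \<le> - lbar l K x i"
    proof -
      have "nx\<^sup>2 + K2 * Bf * nx\<^sup>2 - (\<alpha> + \<beta>l i) / 2 * nx\<^sup>2 + \<bar>\<beta>l i\<bar> * nx\<^sup>2
          = (\<bar>\<beta>l i\<bar> - \<beta>l i / 2 - 3 / 2 * Bl) * nx\<^sup>2"
        unfolding \<alpha>_def by (simp add: algebra_simps)
      also have "\<dots> \<le> 0" using Bl(1)[of i] by (intro mult_nonpos_nonneg) (auto simp: abs_le_iff)
      finally show ?thesis using lb by linarith
    qed
    finally show ?thesis unfolding y_def .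
  qed
  show ?thesis
  proof (intro exI conjI ballI allI impI)
    show "0 < \<delta>" "0 < \<alpha>" "\<delta> \<le> 1" by (fact \<delta>(1) \<alpha>0 \<delta>(2))+
    show "(\<Sum>j\<in>UNIV. P i j * Vf P (\<lambda>i. A i + B i ** K i) l K \<beta>l \<alpha> (fhat f K i x) j)
          - Vf P (\<lambda>i. A i + B i ** K i) l K \<beta>l \<alpha> x i \<le> - lbar l K x i" if "x \<in> ball 0 \<delta>" for x i
      using part_a[of x i] that unfolding G_def by simp
    fix y :: "real^'n" and j assume y: "norm y < \<delta>"
    have "\<bar>Vf P G l K \<beta>l \<alpha> y j\<bar> \<le> A\<alpha> * K1 * (norm y * norm y) + K2 * norm y"
      using diff[where y=y and y'=0 and j=j] by (simp add: Vf0)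
    also have "\<dots> \<le> A\<alpha> * K1 * (1 * 1) + K2 * 1"
      using y \<delta> A\<alpha> K1 K2 by (intro add_mono mult_left_mono mult_mono) auto
    finally show "- (A\<alpha> * K1 + K2) \<le> Vf P (\<lambda>i. A i + B i ** K i) l K \<beta>l \<alpha> y j"
      unfolding G_def by simp
  qed
qed




lemma pol_state_snoc:
  "pol_state f pol x i (ms @ [j]) = f (pol_state f pol x i ms) (pol (i # ms)) (last (i # ms))"
  by (induction ms arbitrary: pol x i) auto

lemma cl_state_snoc:
  "cl_state f kap x i (ms @ [j]) = f (cl_state f kap x i ms) (kap (cl_state f kap x i ms) (last (i # ms))) (last (i # ms))"
  by (induction ms arbitrary: x i) auto

lemma pol_state_cong:
  "(\<And>h. length h \<le> length ms \<Longrightarrow> pol h = pol' h) \<Longrightarrow> pol_state f pol x i ms = pol_state f pol' x i ms"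
proof (induction ms arbitrary: pol pol' x i)
  case Nil then show ?case by simp
next
  case (Cons j js)
  have "pol [i] = pol' [i]" using Cons.prems by simp
  moreover have "pol_state f (\<lambda>h. pol (i # h)) y j js = pol_state f (\<lambda>h. pol' (i # h)) y j js" for y
    by (rule Cons.IH) (use Cons.prems in auto)
  ultimately show ?case by simp
qed

lemma Ehist_cong:
  "(\<And>ms. ms \<in> paths k \<Longrightarrow> g (i#ms) = g' (i#ms)) \<Longrightarrow> Ehist P i k g = Ehist P i k g'"
  unfolding Ehist_def by (rule sum.cong) auto

lemma lsc_bounded_below:
  fixes F :: "'a::topological_space \<Rightarrow> real"
  assumes "lsc F" "compact S"
  shows "\<exists>b. \<forall>x\<in>S. b \<le> F x"
proof -
  have "\<forall>x. \<exists>U. open U \<and> x \<in> U \<and> (\<forall>y\<in>U. F x - 1 < F y)"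
  proof
    fix x
    have "eventually (\<lambda>y. F x - 1 < F y) (nhds x)" using assms(1) unfolding lsc_def by auto
    then show "\<exists>U. open U \<and> x \<in> U \<and> (\<forall>y\<in>U. F x - 1 < F y)" unfolding eventually_nhds by blast
  qed
  then obtain U where U: "\<And>x. open (U x)" "\<And>x. x \<in> U x" "\<And>x y. y \<in> U x \<Longrightarrow> F x - 1 < F y"
    by metis
  obtain T where T: "T \<subseteq> S" "finite T" "S \<subseteq> (\<Union>c\<in>T. U c)"
    by (rule compactE_image[OF assms(2), of S U]) (use U in auto)
  show ?thesis
  proof (intro exI ballI)
    fix y assume "y \<in> S"
    then obtain t where t: "t \<in> T" "y \<in> U t" using T by auto
    have "- (\<Sum>s\<in>T. \<bar>F s\<bar>) - 1 \<le> - \<bar>F t\<bar> - 1" using member_le_sum[of t T "\<lambda>s. \<bar>F s\<bar>"] t T by auto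
    also have "\<dots> \<le> F y" using U(3)[OF t(2)] by linarith
    finally show "- (\<Sum>s\<in>T. \<bar>F s\<bar>) - 1 \<le> F y" .
  qed
qed

lemma pos_mult_split:
  fixes a b :: real
  assumes "0 < a * b" "0 \<le> a" "0 \<le> b"
  shows "0 < a" "0 < b"
  using assms by (auto simp: zero_less_mult_iff)




lemma rec_state:
  fixes f :: "real^'n \<Rightarrow> real^'m \<Rightarrow> 'q \<Rightarrow> real^'n"
  assumes ps: "ps = (\<lambda>h. if length h < N then pol (i # h) else K (last h) *v pol_state f pol x i h)"
  shows "length ms < N \<Longrightarrow> pol_state f ps (f x (pol [i]) i) j ms = pol_state f pol x i (j # ms)"
    "length ms0 = N - 1 \<Longrightarrow> N \<ge> 1 \<Longrightarrow> pol_state f ps (f x (pol [i]) i) j (ms0 @ [j']) =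
        fhat f K (last (j # ms0)) (pol_state f pol x i (j # ms0))"
proof -
  show st: "pol_state f ps (f x (pol [i]) i) j ms = pol_state f pol x i (j # ms)" if "length ms < N" for ms
  proof -
    have "pol_state f ps (f x (pol [i]) i) j ms = pol_state f (\<lambda>h. pol (i # h)) (f x (pol [i]) i) j ms"
      by (rule pol_state_cong) (use that ps in auto)
    then show ?thesis by simp
  qed
  assume a: "length ms0 = N - 1" "N \<ge> 1"
  have "pol_state f ps (f x (pol [i]) i) j (ms0 @ [j']) =
     f (pol_state f pol x i (j # ms0)) (ps (j # ms0)) (last (j # ms0))"
    using a by (simp add: pol_state_snoc st)
  also have "ps (j # ms0) = K (last (j # ms0)) *v pol_state f pol x i (j # ms0)"
    using a ps by simp
  finally show "pol_state f ps (f x (pol [i]) i) j (ms0 @ [j']) =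
        fhat f K (last (j # ms0)) (pol_state f pol x i (j # ms0))" by (simp add: fhat_def)
qed

lemma rec_feasible:
  fixes P :: "'q::finite \<Rightarrow> 'q \<Rightarrow> real" and f :: "real^'n \<Rightarrow> real^'m \<Rightarrow> 'q \<Rightarrow> real^'n"
  assumes sto: "stochastic P" and N: "N \<ge> 1" and upi: "UPI P f Y K Xf"
    and feas: "feasible_pol P f Y Xf N x i pol"
    and ps: "ps = (\<lambda>h. if length h < N then pol (i # h) else K (last h) *v pol_state f pol x i h)"
    and pij: "P i j > 0"
  shows "feasible_pol P f Y Xf N (f x (pol [i]) i) j ps"
  unfolding feasible_pol_def
proof (intro conjI ballI allI impI)
  note st = rec_state[OF ps]
  have feas1: "\<And>k ms. k < N \<Longrightarrow> ms \<in> paths k \<Longrightarrow> pprob P i ms > 0 \<Longrightarrow>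
        (pol_state f pol x i ms, pol (i # ms)) \<in> Y (last (i # ms))"
   and feas2: "\<And>ms. ms \<in> paths N \<Longrightarrow> pprob P i ms > 0 \<Longrightarrow> pol_state f pol x i ms \<in> Xf (last (i # ms))"
    using feas unfolding feasible_pol_def by auto
  fix k ms assume k: "k < N" and ms: "ms \<in> paths k" and pp: "0 < pprob P j ms"
  have pp': "pprob P i (j # ms) > 0" using pij pp by simp
  have lms: "length ms = k" using ms by (simp add: paths_def)
  show "(pol_state f ps (f x (pol [i]) i) j ms, ps (j # ms)) \<in> Y (last (j # ms))"
  proof (cases "Suc k < N")
    case True
    have "(pol_state f pol x i (j # ms), pol (i # j # ms)) \<in> Y (last (i # j # ms))"
      by (rule feas1[OF True _ pp']) (use lms in \<open>simp add: paths_def\<close>)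
    moreover have "ps (j # ms) = pol (i # j # ms)" using True lms ps by simp
    moreover have "pol_state f ps (f x (pol [i]) i) j ms = pol_state f pol x i (j # ms)"
      using st(1)[of ms] lms k by simp
    ultimately show ?thesis by simp
  next
    case False
    then have kN: "Suc k = N" using k by simp
    have "pol_state f pol x i (j # ms) \<in> Xf (last (i # j # ms))"
      by (rule feas2[OF _ pp']) (use lms kN in \<open>simp add: paths_def\<close>)
    then have "(pol_state f pol x i (j # ms), K (last (j # ms)) *v pol_state f pol x i (j # ms)) \<in> Y (last (j # ms))"
      using upi unfolding UPI_def by simp
    moreover have "ps (j # ms) = K (last (j # ms)) *v pol_state f pol x i (j # ms)" using kN lms ps by simp
    moreover have "pol_state f ps (f x (pol [i]) i) j ms = pol_state f pol x i (j # ms)"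
      using st(1)[of ms] lms k by simp
    ultimately show ?thesis by simp
  qed
next
  note st = rec_state[OF ps]
  have feas1: "\<And>k ms. k < N \<Longrightarrow> ms \<in> paths k \<Longrightarrow> pprob P i ms > 0 \<Longrightarrow>
        (pol_state f pol x i ms, pol (i # ms)) \<in> Y (last (i # ms))"
   and feas2: "\<And>ms. ms \<in> paths N \<Longrightarrow> pprob P i ms > 0 \<Longrightarrow> pol_state f pol x i ms \<in> Xf (last (i # ms))"
    using feas unfolding feasible_pol_def by auto
  fix ms assume ms: "ms \<in> paths N" and pp: "0 < pprob P j ms"
  then obtain ms0 j' where ms0: "ms = ms0 @ [j']" "length ms0 = N - 1"
    using N by (cases ms rule: rev_cases) (auto simp: paths_def)
  have pp0: "0 < pprob P j ms0" "0 < P (last (j # ms0)) j'"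
    using pos_mult_split[of "pprob P j ms0" "P (last (j # ms0)) j'"] pp ms0 pprob_nonneg[OF sto] sto
    by (auto simp: pprob_snoc stochastic_def)
  have "pol_state f pol x i (j # ms0) \<in> Xf (last (i # j # ms0))"
    by (rule feas2) (use ms0 N pij pp0 in \<open>auto simp: paths_def\<close>)
  then have "f (pol_state f pol x i (j # ms0)) (K (last (j # ms0)) *v pol_state f pol x i (j # ms0)) (last (j # ms0)) \<in> Xf j'"
    using upi pp0(2) unfolding UPI_def by simp
  then show "pol_state f ps (f x (pol [i]) i) j ms \<in> Xf (last (j # ms))"
    using st(2)[OF ms0(2) N] ms0 by (simp add: fhat_def)
qed




lemma rec_cost:
  fixes P :: "'q::finite \<Rightarrow> 'q \<Rightarrow> real" and f :: "real^'n \<Rightarrow> real^'m \<Rightarrow> 'q \<Rightarrow> real^'n"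
    and l :: "real^'n \<Rightarrow> real^'m \<Rightarrow> 'q \<Rightarrow> real" and V :: "real^'n \<Rightarrow> 'q \<Rightarrow> real"
  assumes sto: "stochastic P" and N: "N \<ge> 1"
    and feas: "feasible_pol P f Y Xf N x i pol"
    and ps: "ps = (\<lambda>h. if length h < N then pol (i # h) else K (last h) *v pol_state f pol x i h)"
    and LV: "\<And>y \<theta>. norm y < \<delta> \<Longrightarrow> (\<Sum>j\<in>UNIV. P \<theta> j * V (fhat f K \<theta> y) j) - V y \<theta> \<le> - lbar l K y \<theta>"
    and Xfb: "\<And>\<theta>. Xf \<theta> \<subseteq> ball 0 \<delta>"
    and ls: "\<And>\<theta>. l 0 0 \<theta> = ls"
  shows "(\<Sum>j\<in>UNIV. P i j * cost_pol P f l V N (f x (pol [i]) i) j ps)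
          \<le> cost_pol P f l V N x i pol - l x (pol [i]) i + ls"
proof -
  obtain M where NM: "N = Suc M" using N by (cases N) auto
  define x1 where "x1 = f x (pol [i]) i"
  define X where "X = pol_state f pol x i"
  define Ft where "Ft h = (\<Sum>j'\<in>UNIV. P (last h) j' * V (fhat f K (last h) (X (tl h))) j')" for h
  define Lp where "Lp h = l (X (tl h)) (pol h) (last h)" for h
  define Lk where "Lk h = l (X (tl h)) (K (last h) *v X (tl h)) (last h)" for h
  define Vt where "Vt h = V (X (tl h)) (last h)" for h
  note st = rec_state[OF ps]
  have T: "Ehist P j N (\<lambda>h. V (pol_state f ps x1 j (tl h)) (last h)) = Ehist P j M (\<lambda>h. Ft (i#h))" for j
    unfolding NM Ehist_snoc
  proof (rule Ehist_cong)
    fix ms :: "'q list" assume "ms \<in> paths M"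
    then have lm: "length ms = N - 1" using NM by (simp add: paths_def)
    show "(\<Sum>j'\<in>UNIV. P (last (j # ms)) j' * V (pol_state f ps x1 j (tl ((j # ms) @ [j']))) (last ((j # ms) @ [j']))) =
          Ft (i # j # ms)"
      unfolding Ft_def X_def x1_def using st(2)[OF lm N] by simp
  qed
  have S1: "Ehist P j k (\<lambda>h. l (pol_state f ps x1 j (tl h)) (ps h) (last h)) = Ehist P j k (\<lambda>h. Lp (i#h))"
    if k: "k < M" for j k
  proof (rule Ehist_cong)
    fix ms :: "'q list" assume "ms \<in> paths k"
    then have lm: "length ms = k" by (simp add: paths_def)
    have "ps (j # ms) = pol (i # j # ms)" using ps lm k NM by simp
    then show "l (pol_state f ps x1 j (tl (j # ms))) (ps (j # ms)) (last (j # ms)) = Lp (i # j # ms)"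
      unfolding Lp_def X_def x1_def using st(1)[of ms] lm k NM by simp
  qed
  have S2: "Ehist P j M (\<lambda>h. l (pol_state f ps x1 j (tl h)) (ps h) (last h)) = Ehist P j M (\<lambda>h. Lk (i#h))" for j
  proof (rule Ehist_cong)
    fix ms :: "'q list" assume "ms \<in> paths M"
    then have lm: "length ms = M" by (simp add: paths_def)
    have "ps (j # ms) = K (last (j # ms)) *v pol_state f pol x i (j # ms)" using ps lm NM by simp
    then show "l (pol_state f ps x1 j (tl (j # ms))) (ps (j # ms)) (last (j # ms)) = Lk (i # j # ms)"
      unfolding Lk_def X_def x1_def using st(1)[of ms] lm NM by simp
  qed
  have cj: "cost_pol P f l V N x1 j ps = Ehist P j M (\<lambda>h. Ft (i#h)) + (\<Sum>k<M. Ehist P j k (\<lambda>h. Lp (i#h))) + Ehist P j M (\<lambda>h. Lk (i#h))" for j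
  proof -
    have "(\<Sum>k<N. Ehist P j k (\<lambda>h. l (pol_state f ps x1 j (tl h)) (ps h) (last h)))
        = (\<Sum>k<M. Ehist P j k (\<lambda>h. l (pol_state f ps x1 j (tl h)) (ps h) (last h))) + Ehist P j M (\<lambda>h. Lk (i#h))"
      unfolding NM by (simp add: S2)
    also have "(\<Sum>k<M. Ehist P j k (\<lambda>h. l (pol_state f ps x1 j (tl h)) (ps h) (last h))) = (\<Sum>k<M. Ehist P j k (\<lambda>h. Lp (i#h)))"
      by (rule sum.cong) (auto simp: S1)
    finally show ?thesis unfolding cost_pol_def T by simp
  qed
  have "(\<Sum>j\<in>UNIV. P i j * cost_pol P f l V N x1 j ps) =
     (\<Sum>j\<in>UNIV. P i j * Ehist P j M (\<lambda>h. Ft (i#h))) + (\<Sum>k<M. \<Sum>j\<in>UNIV. P i j * Ehist P j k (\<lambda>h. Lp (i#h)))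
     + (\<Sum>j\<in>UNIV. P i j * Ehist P j M (\<lambda>h. Lk (i#h)))"
    by (simp add: cj distrib_left sum.distrib sum_distrib_left sum.swap[of _ "{..<M}"])
  also have "\<dots> = Ehist P i N Ft + (\<Sum>k<M. Ehist P i (Suc k) Lp) + Ehist P i N Lk"
    by (simp add: Ehist_Suc NM)
  finally have L: "(\<Sum>j\<in>UNIV. P i j * cost_pol P f l V N x1 j ps) = Ehist P i N Ft + (\<Sum>k<M. Ehist P i (Suc k) Lp) + Ehist P i N Lk" .
  have R: "cost_pol P f l V N x i pol = Ehist P i N Vt + l x (pol [i]) i + (\<Sum>k<M. Ehist P i (Suc k) Lp)"
    unfolding cost_pol_def NM sum.lessThan_Suc_shift by (simp add: Vt_def[abs_def] Lp_def[abs_def] X_def)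
  have key: "Ehist P i N (\<lambda>h. Ft h + Lk h - Vt h) \<le> Ehist P i N (\<lambda>h. ls)"
  proof (rule Ehist_mono_pos[OF sto])
    fix ms assume ms: "ms \<in> paths N" "0 < pprob P i ms"
    have "X ms \<in> Xf (last (i # ms))" using feas ms unfolding feasible_pol_def X_def by auto
    then have "norm (X ms) < \<delta>" using Xfb[of "last (i # ms)"] by (auto simp del: last.simps)
    from LV[OF this, of "last (i # ms)"]
    show "Ft (i # ms) + Lk (i # ms) - Vt (i # ms) \<le> ls"
      unfolding Ft_def Lk_def Vt_def lbar_def using ls by simp
  qed
  then have "Ehist P i N Ft + Ehist P i N Lk - Ehist P i N Vt \<le> ls"
    by (simp add: Ehist_add Ehist_diff Ehist_const[OF sto])
  then show ?thesis unfolding x1_def[symmetric] L R by linarith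
qed




lemma part2:
  fixes P :: "'q::finite \<Rightarrow> 'q \<Rightarrow> real" and f :: "real^'n \<Rightarrow> real^'m \<Rightarrow> 'q \<Rightarrow> real^'n"
    and l :: "real^'n \<Rightarrow> real^'m \<Rightarrow> 'q \<Rightarrow> real" and V :: "real^'n \<Rightarrow> 'q \<Rightarrow> real"
    and Y :: "'q \<Rightarrow> ((real^'n) \<times> (real^'m)) set"
    and lam :: "real^'n \<Rightarrow> 'q \<Rightarrow> real" and \<rho> :: "real^'n \<Rightarrow> 'q \<Rightarrow> real"
    and kap :: "real^'n \<Rightarrow> 'q \<Rightarrow> real^'m"
  assumes sto: "stochastic P" and N: "N \<ge> 1" and Ycomp: "\<And>i. compact (Y i)"
    and l_nonneg: "\<And>x u i. 0 \<le> l x u i" and ls: "\<And>\<theta>. l 0 0 \<theta> = ls"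
    and LV: "\<And>y \<theta>. norm y < \<delta> \<Longrightarrow> (\<Sum>j\<in>UNIV. P \<theta> j * V (fhat f K \<theta> y) j) - V y \<theta> \<le> - lbar l K y \<theta>"
    and Vb: "\<And>y j. norm y < \<delta> \<Longrightarrow> - Vb \<le> V y j"
    and upi: "UPI P f Y K Xf" and Xfb: "\<And>\<theta>. Xf \<theta> \<subseteq> ball 0 \<delta>"
    and lsc: "\<And>i. lsc (\<lambda>x. lam x i)"
    and diss: "\<And>x u i. (\<Sum>j\<in>UNIV. P i j * lam (f x u i) j) - lam x i \<le> l x u i - ls - \<rho> x i"
    and \<gamma>: "\<gamma> > 0" and \<rho>\<gamma>: "\<And>x i. \<rho> x i \<ge> \<gamma> * (norm x)\<^sup>2"
    and EMPC: "EMPC_law P f Y Xf l V N kap"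
  shows "loc_ms_stable P f Y Xf N kap"
proof -
  define F where "F x i \<longleftrightarrow> (\<exists>pol. feasible_pol P f Y Xf N x i pol)" for x i
  define opt where "opt x i = (SOME pol. optimal_pol P f Y Xf l V N x i pol \<and> kap x i = pol [i])" for x i
  have opt: "optimal_pol P f Y Xf l V N x i (opt x i) \<and> kap x i = opt x i [i]" if "F x i" for x i
  proof -
    have "\<exists>pol. optimal_pol P f Y Xf l V N x i pol \<and> kap x i = pol [i]"
      using EMPC that unfolding EMPC_law_def F_def by blast
    then show ?thesis unfolding opt_def by (rule someI_ex)
  qed
  define VN where "VN x i = cost_pol P f l V N x i (opt x i)" for x i
  have drift_VN: "(\<forall>j. P i j > 0 \<longrightarrow> F (f x (kap x i) i) j) \<and>
      (\<Sum>j\<in>UNIV. P i j * VN (f x (kap x i) i) j) \<le> VN x i - l x (kap x i) i + ls" if Fx: "F x i" for x i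
  proof -
    define pol where "pol = opt x i"
    have feas: "feasible_pol P f Y Xf N x i pol" and u: "kap x i = pol [i]"
      using opt[OF Fx] unfolding pol_def optimal_pol_def by auto
    define ps where "ps = (\<lambda>h. if length h < N then pol (i # h) else K (last h) *v pol_state f pol x i h)"
    have fj: "feasible_pol P f Y Xf N (f x (pol [i]) i) j ps" if "P i j > 0" for j
      by (rule rec_feasible[OF sto N upi feas ps_def that])
    have Fj: "F (f x (kap x i) i) j" if "P i j > 0" for j using fj[OF that] u unfolding F_def by auto
    have le: "P i j * VN (f x (kap x i) i) j \<le> P i j * cost_pol P f l V N (f x (pol [i]) i) j ps" for j
    proof (cases "P i j > 0")
      case True
      have "optimal_pol P f Y Xf l V N (f x (kap x i) i) j (opt (f x (kap x i) i) j)"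
        using opt[OF Fj[OF True]] by simp
      then have "VN (f x (kap x i) i) j \<le> cost_pol P f l V N (f x (pol [i]) i) j ps"
        unfolding VN_def optimal_pol_def using fj[OF True] u by simp
      then show ?thesis using True by (simp add: mult_left_mono)
    next
      case False
      then have "P i j = 0" using sto unfolding stochastic_def by (metis order_less_le)
      then show ?thesis by simp
    qed
    have "(\<Sum>j\<in>UNIV. P i j * VN (f x (kap x i) i) j) \<le> (\<Sum>j\<in>UNIV. P i j * cost_pol P f l V N (f x (pol [i]) i) j ps)"
      by (rule sum_mono[OF le])
    also have "\<dots> \<le> cost_pol P f l V N x i pol - l x (pol [i]) i + ls"
      by (rule rec_cost[OF sto N feas ps_def LV Xfb ls])
    finally show ?thesis using Fj u unfolding VN_def pol_def by simp
  qed
  define W where "W x i = VN x i + lam x i" for x i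
  have drift_W: "(\<Sum>j\<in>UNIV. P i j * W (f x (kap x i) i) j) \<le> W x i - \<gamma> * (norm x)\<^sup>2" if "F x i" for x i
  proof -
    have "(\<Sum>j\<in>UNIV. P i j * W (f x (kap x i) i) j) =
        (\<Sum>j\<in>UNIV. P i j * VN (f x (kap x i) i) j) + (\<Sum>j\<in>UNIV. P i j * lam (f x (kap x i) i) j)"
      unfolding W_def by (simp add: distrib_left sum.distrib)
    then show ?thesis using drift_VN[OF that] diss[of i x "kap x i"] \<rho>\<gamma>[of x i] unfolding W_def by linarith
  qed
  have inY: "x \<in> fst ` Y i" if Fx: "F x i" for x i
  proof -
    obtain pol where "feasible_pol P f Y Xf N x i pol" using Fx unfolding F_def by blast
    then have "(x, pol [i]) \<in> Y i" unfolding feasible_pol_def using N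
      by (auto dest!: spec[of _ 0] simp: paths_def)
    then show ?thesis by force
  qed
  have "\<forall>i. \<exists>b. \<forall>x\<in>fst ` Y i. b \<le> lam x i"
    using lsc_bounded_below[OF lsc compact_continuous_image[OF continuous_on_fst[OF continuous_on_id] Ycomp]] by auto
  then obtain bl where bl: "\<And>i x. x \<in> fst ` Y i \<Longrightarrow> bl i \<le> lam x i" by metis
  define Wb where "Wb = Vb + (\<Sum>i\<in>UNIV. \<bar>bl i\<bar>)"
  have W_lb: "- Wb \<le> W x i" if Fx: "F x i" for x i
  proof -
    have feas: "feasible_pol P f Y Xf N x i (opt x i)" using opt[OF Fx] unfolding optimal_pol_def by auto
    have "- Vb \<le> Ehist P i N (\<lambda>h. V (pol_state f (opt x i) x i (tl h)) (last h))"
    proof -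
      have "Ehist P i N (\<lambda>h. - Vb) \<le> Ehist P i N (\<lambda>h. V (pol_state f (opt x i) x i (tl h)) (last h))"
      proof (rule Ehist_mono_pos[OF sto])
        fix ms assume ms: "ms \<in> paths N" "0 < pprob P i ms"
        then have "pol_state f (opt x i) x i ms \<in> Xf (last (i # ms))" using feas unfolding feasible_pol_def by auto
        then have "norm (pol_state f (opt x i) x i ms) < \<delta>" using Xfb[of "last (i # ms)"] by (auto simp del: last.simps)
        then show "- Vb \<le> V (pol_state f (opt x i) x i (tl (i # ms))) (last (i # ms))" using Vb by simp
      qed
      then show ?thesis by (simp add: Ehist_const[OF sto])
    qed
    moreover have "0 \<le> (\<Sum>k<N. Ehist P i k (\<lambda>h. l (pol_state f (opt x i) x i (tl h)) (opt x i h) (last h)))"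
      by (intro sum_nonneg Ehist_nonneg[OF sto] l_nonneg)
    ultimately have "- Vb \<le> VN x i" unfolding VN_def cost_pol_def by linarith
    moreover have "- \<bar>bl i\<bar> \<le> lam x i" using bl[OF inY[OF Fx]] by linarith
    moreover have "\<bar>bl i\<bar> \<le> (\<Sum>i\<in>UNIV. \<bar>bl i\<bar>)" by (rule member_le_sum) auto
    ultimately show ?thesis unfolding W_def Wb_def by linarith
  qed
  show ?thesis unfolding loc_ms_stable_def
  proof (intro allI impI)
    fix x0 i0 assume "\<exists>pol. feasible_pol P f Y Xf N x0 i0 pol"
    then have F0: "F x0 i0" unfolding F_def .
    define Z where "Z = cl_state f kap x0 i0"
    have feasZ: "F (Z ms) (last (i0 # ms))" if "pprob P i0 ms > 0" for ms
      using that
    proof (induction ms rule: rev_induct)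
      case Nil then show ?case using F0 by (simp add: Z_def)
    next
      case (snoc j ms)
      have pp: "0 < pprob P i0 ms" "0 < P (last (i0 # ms)) j"
        using pos_mult_split[of "pprob P i0 ms" "P (last (i0 # ms)) j"] snoc.prems pprob_nonneg[OF sto] sto
        by (auto simp: pprob_snoc stochastic_def)
      have "F (f (Z ms) (kap (Z ms) (last (i0 # ms))) (last (i0 # ms))) j"
        using drift_VN[OF snoc.IH[OF pp(1)]] pp(2) by blast
      then show ?case by (simp add: Z_def cl_state_snoc)
    qed
    define a where "a k = Ehist P i0 k (\<lambda>h. W (Z (tl h)) (last h))" for k
    define e where "e k = Ehist P i0 k (\<lambda>h. (norm (Z (tl h)))\<^sup>2)" for k
    have e0: "0 \<le> e k" for k unfolding e_def by (rule Ehist_nonneg[OF sto]) auto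
    have a_lb: "- Wb \<le> a k" for k
    proof -
      have "Ehist P i0 k (\<lambda>h. - Wb) \<le> a k" unfolding a_def
        by (rule Ehist_mono_pos[OF sto]) (use W_lb feasZ in auto)
      then show ?thesis by (simp add: Ehist_const[OF sto])
    qed
    have a_step: "a (Suc k) \<le> a k - \<gamma> * e k" for k
    proof -
      have "a (Suc k) = Ehist P i0 k (\<lambda>h. \<Sum>j\<in>UNIV. P (last h) j * W (Z (tl (h @ [j]))) j)"
        unfolding a_def Ehist_snoc by simp
      also have "\<dots> \<le> Ehist P i0 k (\<lambda>h. W (Z (tl h)) (last h) - \<gamma> * (norm (Z (tl h)))\<^sup>2)"
      proof (rule Ehist_mono_pos[OF sto])
        fix ms assume ms: "ms \<in> paths k" "0 < pprob P i0 ms"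
        have "Z (tl ((i0 # ms) @ [j])) = f (Z ms) (kap (Z ms) (last (i0 # ms))) (last (i0 # ms))" for j
          by (simp add: Z_def cl_state_snoc)
        then show "(\<Sum>j\<in>UNIV. P (last (i0 # ms)) j * W (Z (tl ((i0 # ms) @ [j]))) j)
            \<le> W (Z (tl (i0 # ms))) (last (i0 # ms)) - \<gamma> * (norm (Z (tl (i0 # ms))))\<^sup>2"
          using drift_W[OF feasZ[OF ms(2)]] by simp
      qed
      also have "\<dots> = a k - \<gamma> * e k" unfolding a_def e_def by (simp add: Ehist_diff Ehist_cmult)
      finally show ?thesis .
    qed
    have sum_bound: "\<gamma> * (\<Sum>k<n. e k) \<le> a 0 - a n" for n
    proof (induction n)
      case 0 then show ?case by simp
    next
      case (Suc n) then show ?case using a_step[of n] by (simp add: distrib_left)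
    qed
    have "(\<Sum>k<n. e k) \<le> (a 0 + Wb) / \<gamma>" for n
      using sum_bound[of n] a_lb[of n] \<gamma> by (simp add: field_simps)
    then have "summable e" by (intro summableI_nonneg_bounded[OF e0])
    then have "e \<longlonglongrightarrow> 0" by (rule summable_LIMSEQ_zero)
    then show "(\<lambda>k. Ehist P i0 k (\<lambda>h. (norm (cl_state f kap x0 i0 (tl h)))\<^sup>2)) \<longlonglongrightarrow> 0"
      unfolding e_def Z_def .
  qed
qed


theorem theorem6:
  fixes P :: "'q::finite \<Rightarrow> 'q \<Rightarrow> real"
    and f :: "real^'n \<Rightarrow> real^'m \<Rightarrow> 'q \<Rightarrow> real^'n"
    and Y :: "'q \<Rightarrow> ((real^'n) \<times> (real^'m)) set"
    and l :: "real^'n \<Rightarrow> real^'m \<Rightarrow> 'q \<Rightarrow> real"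
    and ls :: real
    and A :: "'q \<Rightarrow> real^'n^'n" and B :: "'q \<Rightarrow> real^'m^'n"
    and K :: "'q \<Rightarrow> real^'n^'m"
    and \<beta>f \<beta>l :: "'q \<Rightarrow> real"
    and N :: nat
  assumes chain: "stochastic P" "irreducible_chain P" "aperiodic_chain P"
    and Y: "\<And>i. Y i \<noteq> {}" "\<And>i. compact (Y i)"
    and l_nonneg: "\<And>x u i. 0 \<le> l x u i"
    and l_lsc: "\<And>i. lsc (\<lambda>z. l (fst z) (snd z) i)"
    and l_lb: "\<And>i. level_bounded_loc_unif (\<lambda>x u. l x u i)"
    and f_cont: "\<And>i. continuous_on UNIV (\<lambda>z. f (fst z) (snd z) i)"
    and steady: "\<And>i. (0, 0) \<in> Y i" "\<And>i. f 0 0 i = 0" "\<And>i. l 0 0 i = ls"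
      "\<And>i x u. (x, u) \<in> Y i \<Longrightarrow> f x u i = x \<Longrightarrow> ls \<le> l x u i"
    and AB: "\<And>i. ((\<lambda>z. f (fst z) (snd z) i) has_derivative
                  (\<lambda>z. A i *v fst z + B i *v snd z)) (at (0, 0))"
    and K_mss: "MJLS_ms_stable P (\<lambda>i. A i + B i ** K i)"
    and fhat_smooth: "\<And>i. smooth_map (\<beta>f i) (fhat f K i)"
    and lbar_smooth: "\<And>i. smooth_scalar (\<beta>l i) (\<lambda>x. lbar l K x i)"
    and stabilizable: "ms_stabilizable P A B"
    and N: "N \<ge> 1"
  shows "\<exists>\<delta>>0. \<exists>\<alpha>>0.
    (\<forall>x\<in>ball 0 \<delta>. \<forall>i.
        (\<Sum>j\<in>UNIV. P i j * Vf P (\<lambda>i. A i + B i ** K i) l K \<beta>l \<alpha> (fhat f K i x) j)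
          - Vf P (\<lambda>i. A i + B i ** K i) l K \<beta>l \<alpha> x i
        \<le> - lbar l K x i) \<and>
    (\<forall>(Xf :: 'q \<Rightarrow> (real^'n) set) (lam :: real^'n \<Rightarrow> 'q \<Rightarrow> real)
        (\<rho> :: real^'n \<Rightarrow> 'q \<Rightarrow> real) (\<gamma>::real) (kap :: real^'n \<Rightarrow> 'q \<Rightarrow> real^'m).
       UPI P f Y K Xf \<and> (\<forall>i. Xf i \<subseteq> ball 0 \<delta>) \<and>
       (\<forall>i. lsc (\<lambda>x. lam x i)) \<and> (\<forall>i j. lam 0 i = lam 0 j) \<and>
       (\<forall>i. convex_on UNIV (\<lambda>x. \<rho> x i)) \<and> (\<forall>x i. 0 \<le> \<rho> x i) \<and>
       (\<forall>i. \<rho> 0 i = 0) \<and> (\<forall>x i. x \<noteq> 0 \<longrightarrow> 0 < \<rho> x i) \<and>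
       (\<forall>x u i. (\<Sum>j\<in>UNIV. P i j * lam (f x u i) j) - lam x i \<le> l x u i - ls - \<rho> x i) \<and>
       \<gamma> > 0 \<and> (\<forall>x i. \<rho> x i \<ge> \<gamma> * (norm x)\<^sup>2) \<and>
       EMPC_law P f Y Xf l (Vf P (\<lambda>i. A i + B i ** K i) l K \<beta>l \<alpha>) N kap
       \<longrightarrow> loc_ms_stable P f Y Xf N kap)"
  proof -
  obtain \<delta> \<alpha> where d: "\<delta> > 0" "\<alpha> > 0"
    and A: "\<forall>x\<in>ball 0 \<delta>. \<forall>i.
        (\<Sum>j\<in>UNIV. P i j * Vf P (\<lambda>i. A i + B i ** K i) l K \<beta>l \<alpha> (fhat f K i x) j)
          - Vf P (\<lambda>i. A i + B i ** K i) l K \<beta>l \<alpha> x i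
        \<le> - lbar l K x i"
    and Vb: "\<exists>Vb. \<forall>y j. norm y < \<delta> \<longrightarrow> - Vb \<le> Vf P (\<lambda>i. A i + B i ** K i) l K \<beta>l \<alpha> y j"
    using part1[OF chain(1) steady(2) AB K_mss fhat_smooth lbar_smooth] by blast
  obtain Vb where Vb: "\<And>y j. norm y < \<delta> \<Longrightarrow> - Vb \<le> Vf P (\<lambda>i. A i + B i ** K i) l K \<beta>l \<alpha> y j"
    using Vb by blast
  have LV: "\<And>y \<theta>. norm y < \<delta> \<Longrightarrow> (\<Sum>j\<in>UNIV. P \<theta> j * Vf P (\<lambda>i. A i + B i ** K i) l K \<beta>l \<alpha> (fhat f K \<theta> y) j)
          - Vf P (\<lambda>i. A i + B i ** K i) l K \<beta>l \<alpha> y \<theta> \<le> - lbar l K y \<theta>"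
    using A by simp
  have P2: "\<forall>(Xf :: 'q \<Rightarrow> (real^'n) set) (lam :: real^'n \<Rightarrow> 'q \<Rightarrow> real)
        (\<rho> :: real^'n \<Rightarrow> 'q \<Rightarrow> real) (\<gamma>::real) (kap :: real^'n \<Rightarrow> 'q \<Rightarrow> real^'m).
       UPI P f Y K Xf \<and> (\<forall>i. Xf i \<subseteq> ball 0 \<delta>) \<and>
       (\<forall>i. lsc (\<lambda>x. lam x i)) \<and> (\<forall>i j. lam 0 i = lam 0 j) \<and>
       (\<forall>i. convex_on UNIV (\<lambda>x. \<rho> x i)) \<and> (\<forall>x i. 0 \<le> \<rho> x i) \<and>
       (\<forall>i. \<rho> 0 i = 0) \<and> (\<forall>x i. x \<noteq> 0 \<longrightarrow> 0 < \<rho> x i) \<and>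
       (\<forall>x u i. (\<Sum>j\<in>UNIV. P i j * lam (f x u i) j) - lam x i \<le> l x u i - ls - \<rho> x i) \<and>
       \<gamma> > 0 \<and> (\<forall>x i. \<rho> x i \<ge> \<gamma> * (norm x)\<^sup>2) \<and>
       EMPC_law P f Y Xf l (Vf P (\<lambda>i. A i + B i ** K i) l K \<beta>l \<alpha>) N kap
       \<longrightarrow> loc_ms_stable P f Y Xf N kap"
  proof (intro allI impI)
    fix Xf :: "'q \<Rightarrow> (real^'n) set" and lam :: "real^'n \<Rightarrow> 'q \<Rightarrow> real"
      and \<rho> :: "real^'n \<Rightarrow> 'q \<Rightarrow> real" and \<gamma> :: real and kap :: "real^'n \<Rightarrow> 'q \<Rightarrow> real^'m"
    assume H: "UPI P f Y K Xf \<and> (\<forall>i. Xf i \<subseteq> ball 0 \<delta>) \<and>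
       (\<forall>i. lsc (\<lambda>x. lam x i)) \<and> (\<forall>i j. lam 0 i = lam 0 j) \<and>
       (\<forall>i. convex_on UNIV (\<lambda>x. \<rho> x i)) \<and> (\<forall>x i. 0 \<le> \<rho> x i) \<and>
       (\<forall>i. \<rho> 0 i = 0) \<and> (\<forall>x i. x \<noteq> 0 \<longrightarrow> 0 < \<rho> x i) \<and>
       (\<forall>x u i. (\<Sum>j\<in>UNIV. P i j * lam (f x u i) j) - lam x i \<le> l x u i - ls - \<rho> x i) \<and>
       \<gamma> > 0 \<and> (\<forall>x i. \<rho> x i \<ge> \<gamma> * (norm x)\<^sup>2) \<and>
       EMPC_law P f Y Xf l (Vf P (\<lambda>i. A i + B i ** K i) l K \<beta>l \<alpha>) N kap"
    show "loc_ms_stable P f Y Xf N kap"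
      by (rule part2[where \<rho>=\<rho> and \<gamma>=\<gamma> and lam=lam, OF chain(1) N Y(2) l_nonneg steady(3) LV Vb])
         (use H in auto)
  qed
  show ?thesis using d A P2 by blast
qed

end
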